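(* Consider problem (P) with $\mathcal{X}_i=\mathbb{R}^{d_i}$ for all $i$, under Assumption 1, let $\mathcal{G}$ be undirected and connected, suppose $A=[A_1,\dots,A_n]$ has full row rank, and that each $f_i$ is $\mu_i$-strongly convex and $l_i$-smooth. Let $\mu=\min_i\mu_i$, $l=\max_i l_i$, and let $\beta>0$, $\varphi>0$, $\alpha$ satisfy $$\varphi>\max\Big\{\tfrac{l}{2}-1,\;2\bar\sigma^2(\mathbf{A})\Big\},\qquad \alpha>\max\Big\{1,\;\frac{\frac{\varphi\bar\sigma^2(\mathbf{A})}{\mu}+\frac l2}{\varphi+1-\frac l2}\Big\}.$$ Then for any initial point $(\mathbf{x}(0),\boldsymbol\lambda(0),\mathbf{z}(0))\in\mathbb{R}^d\times\mathbb{R}^{np}\times\mathbb{R}^{np}$ with $\sum_{i=1}^n z_i(0)=0$, the trajectory $(\mathbf{x}(t),\boldsymbol\lambda(t),\mathbf{z}(t))$ of IDEA converges exponentially to a point $(\mathbf{x}^*,\boldsymbol\lambda^*,\mathbf{z}^* )$, where $\mathbf{x}^*$ is the unique optimal solution of (P).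
   Context: Problem (P): for $i=1,\dots,n$ let $f_i:\mathbb{R}^{d_i}\to\mathbb{R}$, $\mathcal{X}_i\subseteq\mathbb{R}^{d_i}$, $A_i\in\mathbb{R}^{p\times d_i}$, $b\in\mathbb{R}^p$; $d=\sum_i d_i$, $\mathbf{x}=[x_1^\top,\dots,x_n^\top]^\top$, $f(\mathbf{x})=\sum_i f_i(x_i)$, $A=[A_1,\dots,A_n]$, $\mathcal{X}=\prod_i\mathcal{X}_i$; (P) is $\min f(\mathbf{x})$ s.t. $A\mathbf{x}=b$, $\mathbf{x}\in\mathcal{X}$, assumed to have at least one optimal solution. Assumption 1: each $\mathcal{X}_i$ is closed and convex, $f_i$ is convex on $\mathcal{X}_i$ and differentiable on an open set containing $\mathcal{X}_i$ with $\nabla f_i$ locally Lipschitz there, and Slater's condition holds (some relative interior point of $\mathcal{X}$ satisfies $A\mathbf{x}=b$). $l_i$-smooth means $\nabla f_i$ is $l_i$-Lipschitz. Graph: weighted graph on $\{1,\dots,n\}$ with adjacency matrix $[a_{ij}]$ ($a_{ij}>0$ if agent $i$ receives from agent $j$, else $0$); Laplacian $L=D^{out}-[a_{ij}]$, $D^{out}=\mathrm{diag}(\sum_j a_{ij})_i$. Undirected means $a_{ij}=a_{ji}$. IDEA: choose $b_1,\dots,b_n\in\mathbb{R}^p$ with $\sum_i b_i=b$; $\mathbf{A}=\mathrm{diag}(A_1,\dots,A_n)\in\mathbb{R}^{np\times d}$, $\mathbf{b}=[b_1^\top,\dots,b_n^\top]^\top$, $\mathbf{L}=L\otimes I_p$,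 $\nabla f(\mathbf{x})=[\nabla f_1(x_1)^\top,\dots,\nabla f_n(x_n)^\top]^\top$, $\boldsymbol\lambda$, $\mathbf{z}=[z_1^\top,\dots,z_n^\top]^\top\in\mathbb{R}^{np}$. IDEA is $\dot{\mathbf{x}}=-\alpha(\nabla f(\mathbf{x})+\mathbf{A}^\top\boldsymbol\lambda)-\mathbf{A}^\top(\mathbf{A}\mathbf{x}-\mathbf{b}-\mathbf{z})$, $\dot{\boldsymbol\lambda}=\mathbf{A}\mathbf{x}-\mathbf{b}-\mathbf{z}-\beta\mathbf{L}\boldsymbol\lambda$, $\dot{\mathbf{z}}=\alpha\beta\mathbf{L}\boldsymbol\lambda$. $\bar\sigma(\mathbf{A})$ is the largest singular value of $\mathbf{A}$. Exponential convergence means $\|(\mathbf{x},\boldsymbol\lambda,\mathbf{z})(t)-(\mathbf{x}^*,\boldsymbol\lambda^*,\mathbf{z}^* )\|\le Ce^{-ct}$ for some $C,c>0$. *)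

theory Defs
  imports "HOL-Analysis.Analysis"
begin

text \<open>Block structure: the stacked decision vector lives in real^'d; the coordinate
  k belongs to agent blk k.  Agents are indexed by the finite type 'n, the
  constraint space is real^'p.  The matrix A = [A_1,...,A_n] is a p x d matrix
  whose column k is a column of A_(blk k).\<close>

definition block_proj :: "('d \<Rightarrow> 'n) \<Rightarrow> 'n \<Rightarrow> real^'d \<Rightarrow> real^'d" where
  "block_proj blk i x = (\<chi> k. if blk k = i then x$k else 0)"

definition depends_only_on_block :: "('d \<Rightarrow> 'n) \<Rightarrow> 'n \<Rightarrow> (real^'d \<Rightarrow> real) \<Rightarrow> bool" where
  "depends_only_on_block blk i g \<longleftrightarrow> (\<forall>x y. block_proj blk i x = block_proj blk i y \<longrightarrow> g x = g y)"

definition strongly_convex_block :: "('d \<Rightarrow> 'n) \<Rightarrow> 'n \<Rightarrow> real \<Rightarrow> (real^'d \<Rightarrow> real) \<Rightarrow> bool" where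
  "strongly_convex_block blk i mu g \<longleftrightarrow>
     convex_on UNIV (\<lambda>x. g x - mu / 2 * (norm (block_proj blk i x))\<^sup>2)"

text \<open>Block diagonal matrix bold-A = diag(A_1,...,A_n) applied to x: agent i gets A_i x_i.\<close>
definition bigA :: "real^'d^'p \<Rightarrow> ('d \<Rightarrow> 'n) \<Rightarrow> real^'d \<Rightarrow> real^'p^'n" where
  "bigA A blk x = (\<chi> i. \<chi> j. \<Sum>k\<in>{k. blk k = i}. A$j$k * x$k)"

definition bigAT :: "real^'d^'p \<Rightarrow> ('d \<Rightarrow> 'n) \<Rightarrow> real^'p^'n \<Rightarrow> real^'d" where
  "bigAT A blk v = (\<chi> k. \<Sum>j\<in>UNIV. A$j$k * v$(blk k)$j)"

definition lapl :: "('n \<Rightarrow> 'n \<Rightarrow> real) \<Rightarrow> real^'p^'n \<Rightarrow> real^'p^'n" where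
  "lapl a v = (\<chi> i. \<Sum>j\<in>UNIV. a i j *\<^sub>R (v$i - v$j))"

definition undirected_graph :: "('n \<Rightarrow> 'n \<Rightarrow> real) \<Rightarrow> bool" where
  "undirected_graph a \<longleftrightarrow> (\<forall>i j. a i j \<ge> 0 \<and> a i j = a j i)"

definition graph_connected :: "('n \<Rightarrow> 'n \<Rightarrow> real) \<Rightarrow> bool" where
  "graph_connected a \<longleftrightarrow> (\<forall>i j. (i, j) \<in> {(i, j). a i j > 0}\<^sup>*)"

text \<open>Largest singular value of bold-A = its spectral (operator 2-) norm.\<close>
definition sigma_max :: "real^'d^'p \<Rightarrow> ('d \<Rightarrow> 'n::finite) \<Rightarrow> real" where
  "sigma_max A blk = onorm (bigA A blk)"

end

theory Submission
  imports Defs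
begin

lemma sum_group_blk:
  fixes blk :: "'d::finite \<Rightarrow> 'n::finite" and h :: "'n \<Rightarrow> 'd \<Rightarrow> 'a::comm_monoid_add"
  shows "(\<Sum>i\<in>UNIV. \<Sum>k\<in>{k. blk k = i}. h i k) = (\<Sum>k\<in>UNIV. h (blk k) k)"
proof -
  have "(\<Sum>i\<in>UNIV. \<Sum>k\<in>{k. blk k = i}. h i k) = (\<Sum>i\<in>UNIV. \<Sum>k\<in>{k\<in>UNIV. blk k = i}. h (blk k) k)"
    by (intro sum.cong) auto
  also have "\<dots> = (\<Sum>k\<in>UNIV. h (blk k) k)"
    by (rule sum.group) auto
  finally show ?thesis .
qed

lemma bigA_adj: "bigA A blk x \<bullet> v = x \<bullet> bigAT A blk v"
proof -
  have "bigA A blk x \<bullet> v = (\<Sum>i\<in>UNIV. \<Sum>k\<in>{k. blk k = i}. \<Sum>j\<in>UNIV. A$j$k * x$k * v$i$j)"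
    unfolding bigA_def inner_vec_def inner_real_def
    by (simp add: sum_distrib_right sum.swap[where A=UNIV])
  also have "\<dots> = (\<Sum>k\<in>UNIV. \<Sum>j\<in>UNIV. A$j$k * x$k * v$(blk k)$j)"
    by (rule sum_group_blk)
  also have "\<dots> = x \<bullet> bigAT A blk v"
    unfolding bigAT_def inner_vec_def inner_real_def
    by (simp add: sum_distrib_left mult.commute mult.left_commute)
  finally show ?thesis .
qed

lemma linear_bigA: "linear (bigA A blk)"
  by (rule linearI) (simp_all add: bigA_def vec_eq_iff sum.distrib sum_distrib_left algebra_simps)

lemma linear_bigAT: "linear (bigAT A blk)"
  by (rule linearI) (simp_all add: bigAT_def vec_eq_iff sum.distrib sum_distrib_left algebra_simps)

lemma linear_lapl: "linear (lapl a)"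
  by (rule linearI) (simp_all add: lapl_def vec_eq_iff sum.distrib[symmetric] scaleR_sum_right algebra_simps)

lemma sum_sym_swap:
  fixes a :: "'n::finite \<Rightarrow> 'n \<Rightarrow> real" and h :: "'n \<Rightarrow> 'n \<Rightarrow> real"
  assumes sym: "\<And>i j. a i j = a j i"
  shows "(\<Sum>i\<in>UNIV. \<Sum>j\<in>UNIV. a i j * h j i) = (\<Sum>i\<in>UNIV. \<Sum>j\<in>UNIV. a i j * h i j)"
  by (subst sum.swap) (simp add: sym)

lemma lapl_sym:
  fixes a :: "'n::finite \<Rightarrow> 'n \<Rightarrow> real" and u v :: "real^'p::finite^'n"
  assumes sym: "\<And>i j. a i j = a j i"
  shows "lapl a u \<bullet> v = u \<bullet> lapl a v"
proof -
  have e: "(\<Sum>i\<in>UNIV. \<Sum>j\<in>UNIV. a i j * (u$j \<bullet> v$i)) = (\<Sum>i\<in>UNIV. \<Sum>j\<in>UNIV. a i j * (u$i \<bullet> v$j))"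
    using sum_sym_swap[OF sym, where h="\<lambda>j i. u$j \<bullet> v$i"] by simp
  have "lapl a u \<bullet> v = (\<Sum>i\<in>UNIV. \<Sum>j\<in>UNIV. a i j * (u$i \<bullet> v$i) - a i j * (u$j \<bullet> v$i))"
    unfolding lapl_def by (subst inner_vec_def) (simp add: inner_sum_left inner_diff_left algebra_simps sum_subtractf sum_distrib_left)
  also have "\<dots> = (\<Sum>i\<in>UNIV. \<Sum>j\<in>UNIV. a i j * (u$i \<bullet> v$i)) - (\<Sum>i\<in>UNIV. \<Sum>j\<in>UNIV. a i j * (u$j \<bullet> v$i))"
    by (simp add: sum_subtractf)
  also have "\<dots> = (\<Sum>i\<in>UNIV. \<Sum>j\<in>UNIV. a i j * (u$i \<bullet> v$i)) - (\<Sum>i\<in>UNIV. \<Sum>j\<in>UNIV. a i j * (u$i \<bullet> v$j))"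
    using e by simp
  also have "\<dots> = (\<Sum>i\<in>UNIV. \<Sum>j\<in>UNIV. a i j * (u$i \<bullet> v$i) - a i j * (u$i \<bullet> v$j))"
    by (simp add: sum_subtractf)
  also have "\<dots> = u \<bullet> lapl a v"
    unfolding lapl_def by (subst inner_vec_def) (simp add: inner_sum_right inner_diff_right algebra_simps sum_subtractf sum_distrib_left)
  finally show ?thesis .
qed

lemma lapl_sum:
  fixes a :: "'n::finite \<Rightarrow> 'n \<Rightarrow> real" and v :: "real^'p::finite^'n"
  assumes sym: "\<And>i j. a i j = a j i"
  shows "(\<Sum>i\<in>UNIV. lapl a v $ i) = 0"
proof -
  have e: "(\<Sum>i\<in>UNIV. \<Sum>j\<in>UNIV. a i j *\<^sub>R v$j) = (\<Sum>i\<in>UNIV. \<Sum>j\<in>UNIV. a i j *\<^sub>R v$i)"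
    by (subst sum.swap) (simp add: sym)
  show ?thesis
    unfolding lapl_def using e by (simp add: scaleR_diff_right sum_subtractf)
qed

lemma lapl_quad:
  fixes a :: "'n::finite \<Rightarrow> 'n \<Rightarrow> real" and v :: "real^'p::finite^'n"
  assumes sym: "\<And>i j. a i j = a j i"
  shows "v \<bullet> lapl a v = (\<Sum>i\<in>UNIV. \<Sum>j\<in>UNIV. a i j / 2 * (norm (v$i - v$j))\<^sup>2)"
proof -
  have e1: "(\<Sum>i\<in>UNIV. \<Sum>j\<in>UNIV. a i j * (v$j \<bullet> v$j)) = (\<Sum>i\<in>UNIV. \<Sum>j\<in>UNIV. a i j * (v$i \<bullet> v$i))"
    using sum_sym_swap[OF sym, where h="\<lambda>j i. v$j \<bullet> v$j"] by simp
  have e2: "(\<Sum>i\<in>UNIV. \<Sum>j\<in>UNIV. a i j * (v$j \<bullet> v$i)) = (\<Sum>i\<in>UNIV. \<Sum>j\<in>UNIV. a i j * (v$i \<bullet> v$j))"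
    using sum_sym_swap[OF sym, where h="\<lambda>j i. v$j \<bullet> v$i"] by simp
  have "(\<Sum>i\<in>UNIV. \<Sum>j\<in>UNIV. a i j / 2 * (norm (v$i - v$j))\<^sup>2)
     = (\<Sum>i\<in>UNIV. \<Sum>j\<in>UNIV. a i j * (v$i \<bullet> v$i) / 2 + a i j * (v$j \<bullet> v$j) / 2 - a i j * (v$i \<bullet> v$j) / 2 - a i j * (v$j \<bullet> v$i) / 2)"
    by (intro sum.cong refl) (simp add: power2_norm_eq_inner inner_diff_left inner_diff_right algebra_simps)
  also have "\<dots> = (\<Sum>i\<in>UNIV. \<Sum>j\<in>UNIV. a i j * (v$i \<bullet> v$i)) / 2 + (\<Sum>i\<in>UNIV. \<Sum>j\<in>UNIV. a i j * (v$j \<bullet> v$j)) / 2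
      - (\<Sum>i\<in>UNIV. \<Sum>j\<in>UNIV. a i j * (v$i \<bullet> v$j)) / 2 - (\<Sum>i\<in>UNIV. \<Sum>j\<in>UNIV. a i j * (v$j \<bullet> v$i)) / 2"
    by (simp add: sum.distrib sum_subtractf sum_divide_distrib)
  also have "\<dots> = (\<Sum>i\<in>UNIV. \<Sum>j\<in>UNIV. a i j * (v$i \<bullet> v$i)) - (\<Sum>i\<in>UNIV. \<Sum>j\<in>UNIV. a i j * (v$i \<bullet> v$j))"
    using e1 e2 by simp
  also have "\<dots> = v \<bullet> lapl a v"
    unfolding lapl_def by (subst inner_vec_def) (simp add: inner_sum_right inner_diff_right sum_subtractf algebra_simps sum_distrib_left)
  finally show ?thesis by simp
qed

definition Dm :: "('n \<Rightarrow> 'n \<Rightarrow> real) \<Rightarrow> real^'p^'n \<Rightarrow> real^'p^('n \<times> 'n)" where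
  "Dm a v = (\<chi> ij. sqrt (a (fst ij) (snd ij) / 2) *\<^sub>R (v$(fst ij) - v$(snd ij)))"

lemma linear_Dm: "linear (Dm a)"
  by (rule linearI) (simp_all add: Dm_def vec_eq_iff algebra_simps)

lemma norm_Dm:
  fixes a :: "'n::finite \<Rightarrow> 'n \<Rightarrow> real" and v :: "real^'p::finite^'n"
  assumes nn: "\<And>i j. a i j \<ge> 0"
  shows "(norm (Dm a v))\<^sup>2 = (\<Sum>i\<in>UNIV. \<Sum>j\<in>UNIV. a i j / 2 * (norm (v$i - v$j))\<^sup>2)"
proof -
  have "(norm (Dm a v))\<^sup>2 = (\<Sum>ij\<in>UNIV. (norm (Dm a v $ ij))\<^sup>2)"
    by (simp add: power2_norm_eq_inner inner_vec_def)
  also have "\<dots> = (\<Sum>ij\<in>UNIV. a (fst ij) (snd ij) / 2 * (norm (v$(fst ij) - v$(snd ij)))\<^sup>2)"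
    using nn by (intro sum.cong refl) (simp add: Dm_def power_mult_distrib)
  also have "\<dots> = (\<Sum>i\<in>UNIV. \<Sum>j\<in>UNIV. a i j / 2 * (norm (v$i - v$j))\<^sup>2)"
    by (simp add: UNIV_Times_UNIV[symmetric] sum.cartesian_product case_prod_unfold del: UNIV_Times_UNIV)
  finally show ?thesis .
qed

lemma Dm_zero_const:
  fixes a :: "'n::finite \<Rightarrow> 'n \<Rightarrow> real" and v :: "real^'p::finite^'n"
  assumes D0: "Dm a v = 0" and conn: "graph_connected a"
  shows "v$i = v$j"
proof -
  have edge: "v$x = v$y" if "a x y > 0" for x y
  proof -
    have "Dm a v $ (x,y) = 0" using D0 by simp
    hence "sqrt (a x y / 2) *\<^sub>R (v$x - v$y) = 0" by (simp add: Dm_def)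
    with that show ?thesis by simp
  qed
  have "(i, j) \<in> {(i, j). a i j > 0}\<^sup>*" using conn unfolding graph_connected_def by blast
  thus ?thesis
  proof (induction rule: rtrancl_induct)
    case base show ?case by simp
  next
    case (step y z) thus ?case using edge by auto
  qed
qed

lemma bigAT_const:
  "bigAT A blk (\<chi> i. c) = transpose A *v c"
  by (simp add: bigAT_def vec_eq_iff matrix_vector_mult_def transpose_def)

definition Phi :: "real^'d^'p \<Rightarrow> ('d \<Rightarrow> 'n) \<Rightarrow> ('n \<Rightarrow> 'n \<Rightarrow> real) \<Rightarrow> real^'p^'n \<Rightarrow> (real^'d) \<times> (real^'p^('n \<times> 'n))" where
  "Phi A blk a v = (bigAT A blk v, Dm a v)"

lemma Phi_lower:
  fixes A :: "real^'d::finite^'p::finite" and blk :: "'d \<Rightarrow> 'n::finite" and a :: "'n \<Rightarrow> 'n \<Rightarrow> real"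
  assumes conn: "graph_connected a" and rk: "rank A = CARD('p)"
  obtains kap where "kap > 0" "\<And>v. kap * norm v \<le> norm (Phi A blk a v)"
proof -
  have lin: "linear (Phi A blk a)"
    unfolding Phi_def
    using linear_bigAT[of A blk] linear_Dm[of a]
    by (simp add: linear_iff)
  have injT: "inj ((*v) (transpose A))"
    using rk by (simp add: full_rank_injective[symmetric] rank_transpose)
  have "inj (Phi A blk a)"
  proof (subst linear_injective_0[OF lin], intro allI impI)
    fix v assume "Phi A blk a v = 0"
    hence B0: "bigAT A blk v = 0" and D0: "Dm a v = 0" by (simp_all add: Phi_def zero_prod_def)
    obtain i0 :: 'n where True by simp
    have vc: "v = (\<chi> i. v$i0)"
      using Dm_zero_const[OF D0 conn] by (simp add: vec_eq_iff)
    have "transpose A *v (v$i0) = 0" using B0 vc bigAT_const by metis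
    hence "v$i0 = 0" using injT by (metis inj_eq matrix_vector_mult_0_right)
    thus "v = 0" using vc by (simp add: vec_eq_iff)
  qed
  from linear_inj_bounded_below_pos[OF lin this] that show ?thesis by blast
qed

lemma norm_Phi_sq:
  "(norm (Phi A blk a v))\<^sup>2 = (norm (bigAT A blk v))\<^sup>2 + (norm (Dm a v))\<^sup>2"
  by (simp add: Phi_def norm_Pair)

definition avg :: "real^'p^'n \<Rightarrow> real^'p^'n" where
  "avg v = (\<chi> i. (1 / real CARD('n)) *\<^sub>R (\<Sum>j\<in>UNIV. v$j))"

definition Mm :: "('n \<Rightarrow> 'n \<Rightarrow> real) \<Rightarrow> real^'p^'n \<Rightarrow> real^'p^'n" where
  "Mm a v = lapl a v + avg v"

lemma linear_avg: "linear (avg :: real^'p::finite^'n::finite \<Rightarrow> _)"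
  by (rule linearI) (simp_all add: avg_def vec_eq_iff sum.distrib scaleR_sum_right algebra_simps)

lemma linear_Mm: "linear (Mm a :: real^'p::finite^'n::finite \<Rightarrow> _)"
  unfolding Mm_def by (intro linear_compose_add linear_lapl linear_avg)

lemma avg_inner: "avg u \<bullet> v = (1 / real CARD('n::finite)) * ((\<Sum>j\<in>UNIV. u$j) \<bullet> (\<Sum>j\<in>UNIV. v$j))"
  for u v :: "real^'p::finite^'n"
  unfolding avg_def by (subst inner_vec_def) (simp add: inner_sum_right sum_distrib_left)

lemma avg_sym: "avg u \<bullet> v = u \<bullet> avg v"
  for u v :: "real^'p::finite^'n::finite"
  using avg_inner[of u v] avg_inner[of v u] by (simp add: inner_commute)

lemma avg_sum: "(\<Sum>i\<in>UNIV. avg v $ i) = (\<Sum>j\<in>UNIV. v$j)"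
  for v :: "real^'p::finite^'n::finite"
proof -
  have "(\<Sum>i\<in>(UNIV::'n set). (1 / real CARD('n)) *\<^sub>R (\<Sum>j\<in>UNIV. v$j)) = real CARD('n) *\<^sub>R ((1 / real CARD('n)) *\<^sub>R (\<Sum>j\<in>UNIV. v$j))"
    by (rule sum_constant_scaleR)
  thus ?thesis by (simp add: avg_def)
qed

lemma Mm_sym:
  fixes a :: "'n::finite \<Rightarrow> 'n \<Rightarrow> real" and u v :: "real^'p::finite^'n"
  assumes sym: "\<And>i j. a i j = a j i"
  shows "Mm a u \<bullet> v = u \<bullet> Mm a v"
  unfolding Mm_def using lapl_sym[where a=a and u=u and v=v, OF sym] avg_sym[of u v]
  by (simp add: inner_add_left inner_add_right)

lemma Mm_sum:
  fixes a :: "'n::finite \<Rightarrow> 'n \<Rightarrow> real" and v :: "real^'p::finite^'n"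
  assumes sym: "\<And>i j. a i j = a j i"
  shows "(\<Sum>i\<in>UNIV. Mm a v $ i) = (\<Sum>j\<in>UNIV. v$j)"
  unfolding Mm_def using lapl_sum[where a=a and v=v, OF sym] avg_sum[of v]
  by (simp add: sum.distrib)

lemma quad_nonneg:
  fixes a :: "'n::finite \<Rightarrow> 'n \<Rightarrow> real" and v :: "real^'p::finite^'n"
  assumes sym: "\<And>i j. a i j = a j i" and nn: "\<And>i j. a i j \<ge> 0"
  shows "v \<bullet> lapl a v = (norm (Dm a v))\<^sup>2"
  using lapl_quad[where a=a and v=v, OF sym] norm_Dm[where a=a and v=v, OF nn] by simp

lemma avg_quad: "v \<bullet> avg v \<ge> 0" for v :: "real^'p::finite^'n::finite"
  using avg_inner[of v v] by (simp add: inner_commute avg_sym)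

lemma inj_Mm:
  fixes a :: "'n::finite \<Rightarrow> 'n \<Rightarrow> real"
  assumes sym: "\<And>i j. a i j = a j i" and nn: "\<And>i j. a i j \<ge> 0" and conn: "graph_connected a"
  shows "inj (Mm a :: real^'p::finite^'n \<Rightarrow> _)"
proof (subst linear_injective_0[OF linear_Mm], intro allI impI)
  fix v :: "real^'p^'n" assume M0: "Mm a v = 0"
  have s0: "(\<Sum>j\<in>UNIV. v$j) = 0" using Mm_sum[where a=a and v=v, OF sym] M0 by simp
  hence "avg v = 0" by (simp add: avg_def vec_eq_iff)
  hence "lapl a v = 0" using M0 by (simp add: Mm_def)
  hence "(norm (Dm a v))\<^sup>2 = 0" using quad_nonneg[where a=a and v=v, OF sym nn] by simp
  hence D0: "Dm a v = 0" by simp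
  obtain i0 :: 'n where True by simp
  have vc: "\<And>i. v$i = v$i0" using Dm_zero_const[OF D0 conn] by blast
  hence "(\<Sum>j\<in>UNIV. v$j) = (\<Sum>j\<in>(UNIV::'n set). v$i0)" by (intro sum.cong refl)
  also have "\<dots> = real CARD('n) *\<^sub>R v$i0" by (rule sum_constant_scaleR)
  finally have "(\<Sum>j\<in>UNIV. v$j) = real CARD('n) *\<^sub>R v$i0" .
  hence "v$i0 = 0" using s0 by simp
  thus "v = 0" using vc by (simp add: vec_eq_iff)
qed

lemma K_exists:
  fixes a :: "'n::finite \<Rightarrow> 'n \<Rightarrow> real"
  assumes sym: "\<And>i j. a i j = a j i" and nn: "\<And>i j. a i j \<ge> 0" and conn: "graph_connected a"
  obtains K :: "real^'p::finite^'n \<Rightarrow> real^'p^'n"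
  where "linear K" "\<And>z. Mm a (K z) = z" "\<And>z. K (Mm a z) = z"
  using linear_injective_isomorphism[OF linear_Mm inj_Mm[OF sym nn conn]] by auto

lemma K_props:
  fixes a :: "'n::finite \<Rightarrow> 'n \<Rightarrow> real" and K :: "real^'p::finite^'n \<Rightarrow> real^'p^'n"
  assumes sym: "\<And>i j. a i j = a j i" and nn: "\<And>i j. a i j \<ge> 0"
    and MK: "\<And>z. Mm a (K z) = z"
  shows K_sym: "K u \<bullet> v = u \<bullet> K v"
    and K_lapl: "(\<Sum>i\<in>UNIV. z$i) = 0 \<Longrightarrow> lapl a (K z) = z"
    and K_nonneg: "K w \<bullet> w \<ge> 0"
proof -
  have "K u \<bullet> v = K u \<bullet> Mm a (K v)" by (simp add: MK)
  also have "\<dots> = Mm a (K u) \<bullet> K v" by (simp add: Mm_sym[where a=a, OF sym])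
  also have "\<dots> = u \<bullet> K v" by (simp add: MK)
  finally show "K u \<bullet> v = u \<bullet> K v" .
next
  assume s0: "(\<Sum>i\<in>UNIV. z$i) = 0"
  have "(\<Sum>i\<in>UNIV. K z $ i) = 0" using Mm_sum[where a=a and v="K z", OF sym] MK[of z] s0 by simp
  hence "avg (K z) = 0" by (simp add: avg_def vec_eq_iff)
  thus "lapl a (K z) = z" using MK[of z] by (simp add: Mm_def)
next
  have "K w \<bullet> w = K w \<bullet> Mm a (K w)" by (simp add: MK)
  also have "\<dots> = K w \<bullet> lapl a (K w) + K w \<bullet> avg (K w)" by (simp add: Mm_def inner_add_right)
  finally show "K w \<bullet> w \<ge> 0"
    using quad_nonneg[where a=a and v="K w", OF sym nn] avg_quad[of "K w"] by simp
qed

lemma convex_tangent: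
  fixes h :: "'a::real_inner \<Rightarrow> real"
  assumes cvx: "convex_on UNIV h" and der: "(h has_derivative (\<lambda>v. v \<bullet> G)) (at x)"
  shows "h y \<ge> h x + (y - x) \<bullet> G"
proof -
  define d where "d = y - x"
  define ph where "ph = (\<lambda>s::real. h (x + s *\<^sub>R d))"
  have cph: "convex_on UNIV ph"
  proof (rule convex_onI)
    fix t s1 s2 :: real assume "0 < t" "t < 1"
    have "x + ((1 - t) *\<^sub>R s1 + t *\<^sub>R s2) *\<^sub>R d = (1 - t) *\<^sub>R (x + s1 *\<^sub>R d) + t *\<^sub>R (x + s2 *\<^sub>R d)"
      by (simp add: algebra_simps)
    thus "ph ((1 - t) *\<^sub>R s1 + t *\<^sub>R s2) \<le> (1 - t) * ph s1 + t * ph s2"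
      unfolding ph_def using convex_onD[OF cvx, of t] \<open>0 < t\<close> \<open>t < 1\<close> by simp
  qed simp
  have "((\<lambda>s::real. x + s *\<^sub>R d) has_derivative (\<lambda>s. s *\<^sub>R d)) (at 0)"
    by (auto intro!: derivative_eq_intros)
  from has_derivative_compose[OF this, of h "\<lambda>v. v \<bullet> G"] der
  have "(ph has_derivative (\<lambda>s. (s *\<^sub>R d) \<bullet> G)) (at 0)"
    unfolding ph_def by (simp add: o_def)
  hence "(ph has_field_derivative (d \<bullet> G)) (at 0)"
    unfolding has_field_derivative_def by (simp add: mult.commute[of _ "d \<bullet> G"])
  hence "ph 1 - ph 0 \<ge> (d \<bullet> G) * (1 - 0)"
    by (intro convex_on_imp_above_tangent[OF cph]) auto
  thus ?thesis unfolding ph_def d_def by (simp add: algebra_simps)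
qed

lemma linear_block_proj: "linear (block_proj blk i)"
  by (rule linearI) (simp_all add: block_proj_def vec_eq_iff)

lemma block_proj_inner: "block_proj blk i u \<bullet> block_proj blk i v = block_proj blk i u \<bullet> v"
  unfolding block_proj_def inner_vec_def by (intro sum.cong) auto

lemma block_proj_sum_sq:
  fixes blk :: "'d::finite \<Rightarrow> 'n::finite" and v :: "real^'d"
  shows "(\<Sum>i\<in>UNIV. (norm (block_proj blk i v))\<^sup>2) = (norm v)\<^sup>2"
proof -
  have "(\<Sum>i\<in>UNIV. (norm (block_proj blk i v))\<^sup>2) = (\<Sum>i\<in>UNIV. \<Sum>k\<in>UNIV. if blk k = i then v$k * v$k else 0)"
    unfolding power2_norm_eq_inner block_proj_def inner_vec_def by (intro sum.cong) auto
  also have "\<dots> = (\<Sum>k\<in>UNIV. \<Sum>i\<in>UNIV. if blk k = i then v$k * v$k else 0)"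
    by (rule sum.swap)
  also have "\<dots> = (\<Sum>k\<in>UNIV. v$k * v$k)"
    by (simp add: sum.delta)
  also have "\<dots> = (norm v)\<^sup>2" by (simp add: power2_norm_eq_inner inner_vec_def)
  finally show ?thesis .
qed

lemma block_tangent:
  fixes blk :: "'d::finite \<Rightarrow> 'n::finite" and g :: "real^'d \<Rightarrow> real"
  assumes der: "\<And>y. GDERIV g y :> G y" and sc: "strongly_convex_block blk i m g"
  shows "g y \<ge> g x + (y - x) \<bullet> G x + m / 2 * (norm (block_proj blk i (y - x)))\<^sup>2"
proof -
  let ?P = "block_proj blk i"
  define h where "h = (\<lambda>x. g x - m / 2 * (?P x \<bullet> ?P x))"
  have cvx: "convex_on UNIV h" using sc unfolding strongly_convex_block_def h_def
    by (simp add: power2_norm_eq_inner)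
  have dP: "(?P has_derivative ?P) (at x)" by (rule linear_imp_has_derivative[OF linear_block_proj])
  have "(h has_derivative (\<lambda>v. v \<bullet> G x - m / 2 * (?P x \<bullet> ?P v + ?P v \<bullet> ?P x))) (at x)"
    unfolding h_def using der[of x] unfolding gderiv_def
    by (auto intro!: derivative_eq_intros dP)
  moreover have "(\<lambda>v. v \<bullet> G x - m / 2 * (?P x \<bullet> ?P v + ?P v \<bullet> ?P x)) = (\<lambda>v. v \<bullet> (G x - m *\<^sub>R ?P x))"
  proof
    fix v
    have "?P x \<bullet> ?P v = v \<bullet> ?P x" using block_proj_inner[of blk i x v] by (simp add: inner_commute)
    thus "v \<bullet> G x - m / 2 * (?P x \<bullet> ?P v + ?P v \<bullet> ?P x) = v \<bullet> (G x - m *\<^sub>R ?P x)"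
      by (simp add: inner_commute inner_diff_right)
  qed
  ultimately have dh: "(h has_derivative (\<lambda>v. v \<bullet> (G x - m *\<^sub>R ?P x))) (at x)" by simp
  have t: "h y \<ge> h x + (y - x) \<bullet> (G x - m *\<^sub>R ?P x)" by (rule convex_tangent[OF cvx dh])
  have lin: "?P y = ?P x + ?P (y - x)" using linear_diff[OF linear_block_proj, of blk i y x] by simp
  have e: "?P y \<bullet> ?P y - ?P x \<bullet> ?P x - 2 * ((y - x) \<bullet> ?P x) = ?P (y - x) \<bullet> ?P (y - x)"
  proof -
    have "(y - x) \<bullet> ?P x = ?P (y - x) \<bullet> ?P x"
      using block_proj_inner[of blk i x "y - x"] by (simp add: inner_commute)
    thus ?thesis by (subst lin)+ (simp add: inner_add_left inner_add_right inner_commute)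
  qed
  from t have "g y \<ge> g x + (y - x) \<bullet> G x + m / 2 * (?P y \<bullet> ?P y - ?P x \<bullet> ?P x - 2 * ((y - x) \<bullet> ?P x))"
    unfolding h_def by (simp add: inner_diff_right algebra_simps)
  thus ?thesis using e by (simp add: power2_norm_eq_inner)
qed

lemma F_tangent:
  fixes blk :: "'d::finite \<Rightarrow> 'n::finite" and f :: "'n \<Rightarrow> real^'d \<Rightarrow> real"
  assumes der: "\<forall>i y. GDERIV (f i) y :> gradf i y"
    and sc: "\<forall>i. strongly_convex_block blk i (mu i) (f i)"
    and mm: "\<forall>i. mu i \<ge> m"
  shows "(\<Sum>i\<in>UNIV. f i y) \<ge> (\<Sum>i\<in>UNIV. f i x) + (y - x) \<bullet> (\<Sum>i\<in>UNIV. gradf i x) + m / 2 * (norm (y - x))\<^sup>2"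
proof -
  have "(\<Sum>i\<in>UNIV. f i x + (y - x) \<bullet> gradf i x + mu i / 2 * (norm (block_proj blk i (y - x)))\<^sup>2) \<le> (\<Sum>i\<in>UNIV. f i y)"
  proof (intro sum_mono)
    fix i
    show "f i x + (y - x) \<bullet> gradf i x + mu i / 2 * (norm (block_proj blk i (y - x)))\<^sup>2 \<le> f i y"
      using block_tangent[where g="f i" and G="gradf i" and blk=blk and i=i and m="mu i" and x=x and y=y] der sc by auto
  qed
  moreover have "(\<Sum>i\<in>UNIV. m / 2 * (norm (block_proj blk i (y - x)))\<^sup>2) \<le> (\<Sum>i\<in>UNIV. mu i / 2 * (norm (block_proj blk i (y - x)))\<^sup>2)"
    using mm by (intro sum_mono mult_right_mono) auto
  moreover have "(\<Sum>i\<in>UNIV. m / 2 * (norm (block_proj blk i (y - x)))\<^sup>2) = m / 2 * (norm (y - x))\<^sup>2"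
  proof -
    have "(\<Sum>i\<in>UNIV. m / 2 * (norm (block_proj blk i (y - x)))\<^sup>2) = m / 2 * (\<Sum>i\<in>UNIV. (norm (block_proj blk i (y - x)))\<^sup>2)"
      by (rule sum_distrib_left[symmetric])
    thus ?thesis by (simp only: block_proj_sum_sq)
  qed
  ultimately show ?thesis
    by (simp add: sum.distrib inner_sum_right)
qed

lemma F_monotone:
  fixes blk :: "'d::finite \<Rightarrow> 'n::finite" and f :: "'n \<Rightarrow> real^'d \<Rightarrow> real"
  assumes der: "\<forall>i y. GDERIV (f i) y :> gradf i y"
    and sc: "\<forall>i. strongly_convex_block blk i (mu i) (f i)"
    and mm: "\<forall>i. mu i \<ge> m"
  shows "(y - x) \<bullet> ((\<Sum>i\<in>UNIV. gradf i y) - (\<Sum>i\<in>UNIV. gradf i x)) \<ge> m * (norm (y - x))\<^sup>2"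
proof -
  have 1: "(\<Sum>i\<in>UNIV. f i y) \<ge> (\<Sum>i\<in>UNIV. f i x) + (y - x) \<bullet> (\<Sum>i\<in>UNIV. gradf i x) + m / 2 * (norm (y - x))\<^sup>2"
    by (rule F_tangent[OF der sc mm])
  have 2: "(\<Sum>i\<in>UNIV. f i x) \<ge> (\<Sum>i\<in>UNIV. f i y) + (x - y) \<bullet> (\<Sum>i\<in>UNIV. gradf i y) + m / 2 * (norm (x - y))\<^sup>2"
    by (rule F_tangent[OF der sc mm])
  have "norm (x - y) = norm (y - x)" by (rule norm_minus_commute)
  moreover have "(x - y) \<bullet> (\<Sum>i\<in>UNIV. gradf i y) = - ((y - x) \<bullet> (\<Sum>i\<in>UNIV. gradf i y))"
    by (simp add: inner_diff_left)
  ultimately show ?thesis using 1 2 by (simp add: inner_diff_right)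
qed

lemma KKT_orth:
  fixes f :: "'n::finite \<Rightarrow> real^'d::finite \<Rightarrow> real" and A :: "real^'d^'p::finite"
  assumes der: "\<forall>i y. GDERIV (f i) y :> gradf i y"
    and feas: "A *v xs = b"
    and opt: "\<forall>w. A *v w = b \<longrightarrow> (\<Sum>i\<in>UNIV. f i xs) \<le> (\<Sum>i\<in>UNIV. f i w)"
    and hker: "A *v h = 0"
  shows "h \<bullet> (\<Sum>i\<in>UNIV. gradf i xs) = 0"
proof -
  define ph where "ph = (\<lambda>s::real. \<Sum>i\<in>UNIV. f i (xs + s *\<^sub>R h))"
  have dF: "((\<lambda>x. \<Sum>i\<in>UNIV. f i x) has_derivative (\<lambda>v. \<Sum>i\<in>UNIV. v \<bullet> gradf i xs)) (at xs)"
    using der unfolding gderiv_def by (intro has_derivative_sum) auto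
  have "((\<lambda>s::real. xs + s *\<^sub>R h) has_derivative (\<lambda>s. s *\<^sub>R h)) (at 0)"
    by (auto intro!: derivative_eq_intros)
  moreover have "((\<lambda>x. \<Sum>i\<in>UNIV. f i x) has_derivative (\<lambda>v. \<Sum>i\<in>UNIV. v \<bullet> gradf i xs))
     (at (xs + 0 *\<^sub>R h))" using dF by simp
  ultimately have "(ph has_derivative (\<lambda>s. \<Sum>i\<in>UNIV. (s *\<^sub>R h) \<bullet> gradf i xs)) (at 0)"
    unfolding ph_def by (rule has_derivative_compose)
  moreover have "(\<lambda>s. \<Sum>i\<in>UNIV. (s *\<^sub>R h) \<bullet> gradf i xs) = (*) (h \<bullet> (\<Sum>i\<in>UNIV. gradf i xs))"
    by (auto simp: inner_sum_right sum_distrib_left mult.commute)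
  ultimately have dd: "DERIV ph 0 :> (h \<bullet> (\<Sum>i\<in>UNIV. gradf i xs))"
    unfolding has_field_derivative_def by simp
  have loc: "\<forall>y. \<bar>0 - y\<bar> < 1 \<longrightarrow> ph 0 \<le> ph y"
  proof (intro allI impI)
    fix s :: real
    have "A *v (xs + s *\<^sub>R h) = b" using feas hker by (simp add: matrix_vector_right_distrib matrix_vector_mult_scaleR)
    thus "ph 0 \<le> ph s" unfolding ph_def using opt by simp
  qed
  show ?thesis by (rule DERIV_local_min[OF dd _ loc]) simp
qed

lemma KKT_mult:
  fixes f :: "'n::finite \<Rightarrow> real^'d::finite \<Rightarrow> real" and A :: "real^'d^'p::finite"
  assumes der: "\<forall>i y. GDERIV (f i) y :> gradf i y"
    and feas: "A *v xs = b"
    and opt: "\<forall>w. A *v w = b \<longrightarrow> (\<Sum>i\<in>UNIV. f i xs) \<le> (\<Sum>i\<in>UNIV. f i w)"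
  obtains c where "transpose A *v c = - (\<Sum>i\<in>UNIV. gradf i xs)"
proof -
  let ?G = "\<Sum>i\<in>UNIV. gradf i xs"
  obtain y z where y: "y \<in> span (range ((*v) (transpose A)))"
    and z: "\<And>w. w \<in> span (range ((*v) (transpose A))) \<Longrightarrow> orthogonal z w" and e: "?G = y + z"
    using orthogonal_subspace_decomp_exists by blast
  have sub: "subspace (range ((*v) (transpose A)))"
    by (rule linear_subspace_image[OF matrix_vector_mul_linear subspace_UNIV])
  have "span (range ((*v) (transpose A))) = range ((*v) (transpose A))"
    using span_eq_iff sub by blast
  hence "y \<in> range ((*v) (transpose A))" using y by blast
  then obtain c where yc: "y = transpose A *v c" by blast
  have zo: "z \<bullet> (transpose A *v w) = 0" for w
    using z[of "transpose A *v w"] by (simp add: span_base orthogonal_def)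
  have "A *v z = 0"
  proof -
    have "z \<bullet> ((A *v z) v* A) = (A *v z) \<bullet> (A *v z)" by (metis dot_lmul_matrix inner_commute)
    hence "(A *v z) \<bullet> (A *v z) = 0"
      using zo[of "A *v z"] by (simp add: transpose_matrix_vector)
    thus ?thesis by simp
  qed
  hence "z \<bullet> ?G = 0" by (rule KKT_orth[OF der feas opt])
  hence "z \<bullet> z = 0" using e zo[of c] yc by (simp add: inner_add_right)
  hence "z = 0" by simp
  have "transpose A *v (- c) = - (transpose A *v c)" by (rule linear_neg[OF matrix_vector_mul_linear])
  hence "transpose A *v (- c) = - ?G" using e yc \<open>z = 0\<close> by simp
  thus ?thesis using that by blast
qed

lemma base_ineq:
  fixes d u w Z :: real
  assumes as: "0 < d" "d \<le> 1/2" "w \<le> u * Z" "0 \<le> u" "0 \<le> Z"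
  shows "(2 - d) * w - u^2 - (1 - d) * Z^2 \<le> d * u^2 - (d/4) * Z^2"
proof -
  have h1: "0 \<le> (2*(1+d)*u - (2-d)*Z)^2" by simp
  have h2: "0 \<le> d * (1 - 2*d) * Z^2" using as by simp
  have h3: "(2 - d) * w \<le> (2 - d) * (u * Z)" using as by (intro mult_left_mono) auto
  have "4*(1+d) * ((1+d)*u^2 - (2-d)*u*Z + (1 - 5*d/4)*Z^2) = (2*(1+d)*u - (2-d)*Z)^2 + 3 * (d * (1 - 2*d) * Z^2)"
    by (simp add: power2_eq_square algebra_simps)
  hence "0 \<le> 4*(1+d) * ((1+d)*u^2 - (2-d)*u*Z + (1 - 5*d/4)*Z^2)" using h1 h2 by linarith
  hence "0 \<le> (1+d)*u^2 - (2-d)*u*Z + (1 - 5*d/4)*Z^2" using as by (simp add: zero_le_mult_iff)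
  thus ?thesis using h3 by (simp add: algebra_simps)
qed

lemma vd_inner:
  fixes u w :: "real \<Rightarrow> 'a::real_inner"
  assumes "(u has_vector_derivative u') (at t within S)" "(w has_vector_derivative w') (at t within S)"
  shows "((\<lambda>s. u s \<bullet> w s) has_real_derivative (u t \<bullet> w' + u' \<bullet> w t)) (at t within S)"
proof -
  have "((\<lambda>s. u s \<bullet> w s) has_derivative (\<lambda>h. u t \<bullet> (h *\<^sub>R w') + (h *\<^sub>R u') \<bullet> w t)) (at t within S)"
    using assms unfolding has_vector_derivative_def by (rule has_derivative_inner)
  moreover have "(\<lambda>h. u t \<bullet> (h *\<^sub>R w') + (h *\<^sub>R u') \<bullet> w t) = (*) (u t \<bullet> w' + u' \<bullet> w t)"
    by (auto simp: algebra_simps)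
  ultimately show ?thesis unfolding has_field_derivative_def by simp
qed

lemma vd_linear:
  fixes u :: "real \<Rightarrow> 'a::real_normed_vector" and f :: "'a \<Rightarrow> 'b::real_normed_vector"
  assumes lf: "bounded_linear f" and d: "(u has_vector_derivative u') F"
  shows "((\<lambda>s. f (u s)) has_vector_derivative f u') F"
proof -
  have "((\<lambda>s. f (u s)) has_derivative (\<lambda>h. f (h *\<^sub>R u'))) F"
    using d unfolding has_vector_derivative_def by (rule bounded_linear.has_derivative[OF lf])
  moreover have "(\<lambda>h. f (h *\<^sub>R u')) = (\<lambda>h. h *\<^sub>R f u')"
    using lf by (simp add: bounded_linear.linear linear_cmul)
  ultimately show ?thesis unfolding has_vector_derivative_def by simp
qed

lemma gronwall_exp:
  fixes V V' :: "real \<Rightarrow> real"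
  assumes d: "\<And>t. t \<ge> 0 \<Longrightarrow> (V has_real_derivative V' t) (at t within {0..})"
    and le: "\<And>t. t \<ge> 0 \<Longrightarrow> V' t \<le> - r * V t"
    and t: "t \<ge> 0"
  shows "V t \<le> V 0 * exp (- r * t)"
proof -
  define W where "W = (\<lambda>s. V s * exp (r * s))"
  have dW: "(W has_real_derivative (V' s * exp (r * s) + V s * (exp (r * s) * r))) (at s within {0..})"
    if "s \<ge> 0" for s
    unfolding W_def using d[OF that] by (auto intro!: derivative_eq_intros)
  have cont: "continuous_on {0..t} W"
  proof -
    have "continuous_on {0..} W"
      using dW by (intro continuous_on_vector_derivative) (auto simp: has_real_derivative_iff_has_vector_derivative)
    thus ?thesis by (rule continuous_on_subset) auto
  qed
  have "W t \<le> W 0"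
  proof (rule DERIV_nonpos_imp_decreasing_open[OF t _ cont])
    fix s assume s: "0 < s" "s < t"
    have "s \<in> interior {0..}" using s by simp
    hence "at s within {0..} = at s" by (rule at_within_interior)
    hence "DERIV W s :> (V' s * exp (r * s) + V s * (exp (r * s) * r))" using dW[of s] s by simp
    moreover have "V' s * exp (r * s) + V s * (exp (r * s) * r) = (V' s + r * V s) * exp (r * s)"
      by (simp add: algebra_simps)
    moreover have "(V' s + r * V s) * exp (r * s) \<le> 0"
      using le[of s] s by (intro mult_nonpos_nonneg) auto
    ultimately show "\<exists>y. DERIV W s :> y \<and> y \<le> 0" by auto
  qed
  hence "V t * exp (r * t) \<le> V 0" by (simp add: W_def)
  hence "V t * exp (r * t) * exp (- r * t) \<le> V 0 * exp (- r * t)" by (intro mult_right_mono) auto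
  thus ?thesis by (simp add: exp_minus field_simps)
qed

lemma T1_scalar:
  fixes T1 al q X Z La sB Lg C3 :: real
  assumes al: "al > 0" and q: "q \<ge> 0" and X: "X \<ge> 0" and Z: "Z \<ge> 0" and sB: "sB > 0" and Lg: "Lg \<ge> 0"
    and T: "T1 \<le> - al * q^2 + al * q * Lg * X + q * sB * (sB * X + Z) + sB^2 * X^2 + sB * X * Z + C3 * X * La"
  shows "T1 \<le> - (al/2) * q^2 + ((al * Lg + sB^2 + sB)^2 / al + sB^2 + sB) * (X^2 + Z^2) + C3 * X * La"
proof -
  define R where "R = al * Lg + sB^2 + sB"
  have R0: "R \<ge> 0" using al Lg sB by (simp add: R_def)
  have h1: "al * q * Lg * X + q * sB * (sB * X + Z) \<le> q * R * (X + Z)"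
  proof -
    have "al * Lg * X + sB * (sB * X + Z) \<le> R * (X + Z)"
      unfolding R_def using al Lg sB X Z
      by (simp add: algebra_simps power2_eq_square mult_nonneg_nonneg)
    hence "q * (al * Lg * X + sB * (sB * X + Z)) \<le> q * (R * (X + Z))" using q by (rule mult_left_mono)
    thus ?thesis by (simp add: algebra_simps)
  qed
  have h2: "q * R * (X + Z) \<le> al/2 * q^2 + R^2 * (X + Z)^2 / (2 * al)"
  proof -
    have "0 \<le> (al * q - R * (X + Z))^2" by simp
    hence "2 * al * (q * R * (X + Z)) \<le> al^2 * q^2 + R^2 * (X + Z)^2"
      by (simp add: power2_eq_square algebra_simps)
    hence "q * R * (X + Z) \<le> (al^2 * q^2 + R^2 * (X + Z)^2) / (2 * al)"
      using al by (simp add: field_simps)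
    also have "\<dots> = al/2 * q^2 + R^2 * (X + Z)^2 / (2 * al)"
      using al by (simp add: field_simps power2_eq_square)
    finally show ?thesis .
  qed
  have h3: "R^2 * (X + Z)^2 / (2 * al) \<le> R^2 / al * (X^2 + Z^2)"
  proof -
    have "0 \<le> (X - Z)^2" by simp
    hence "(X + Z)^2 \<le> 2 * (X^2 + Z^2)"
      by (simp add: power2_eq_square algebra_simps)
    hence "R^2 * (X + Z)^2 \<le> R^2 * (2 * (X^2 + Z^2))" by (intro mult_left_mono) auto
    thus ?thesis using al by (simp add: field_simps)
  qed
  have h4: "sB * X * Z \<le> sB * (X^2 + Z^2)"
  proof -
    have "0 \<le> (X - Z)^2" by simp
    hence "2 * (X * Z) \<le> X^2 + Z^2" by (simp add: power2_eq_square algebra_simps)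
    moreover have "0 \<le> X * Z" using X Z by simp
    ultimately have "X * Z \<le> X^2 + Z^2" by linarith
    hence "sB * (X * Z) \<le> sB * (X^2 + Z^2)" using sB by (intro mult_left_mono) auto
    thus ?thesis by (simp add: algebra_simps)
  qed
  have h5: "sB^2 * X^2 \<le> sB^2 * (X^2 + Z^2)" by (intro mult_left_mono) auto
  have "T1 \<le> - al * q^2 + q * R * (X + Z) + sB^2 * X^2 + sB * X * Z + C3 * X * La"
    using T h1 by linarith
  also have "\<dots> \<le> - al * q^2 + (al/2 * q^2 + R^2 / al * (X^2 + Z^2)) + sB^2 * (X^2 + Z^2) + sB * (X^2 + Z^2) + C3 * X * La"
    using h2 h3 h4 h5 by linarith
  also have "\<dots> = - (al/2) * q^2 + (R^2 / al + sB^2 + sB) * (X^2 + Z^2) + C3 * X * La"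
    by (simp add: algebra_simps)
  finally show ?thesis unfolding R_def .
qed

lemma final_scalar:
  fixes W T1 al be mu d eps kap C1 C3 X Z La q P2 :: real
  assumes al: "al > 0" and be: "be > 0" and kap: "kap > 0" and eps: "eps > 0" and C3: "C3 \<ge> 0"
    and X: "X \<ge> 0" and La: "La \<ge> 0" and P2: "P2 \<ge> 0"
    and W: "W \<le> - (al * mu / 2) * X^2 - (d/4) * Z^2 - d * al * be * P2 + eps * T1"
    and T1: "T1 \<le> - (al/2) * q^2 + C1 * (X^2 + Z^2) + C3 * X * La"
    and kq: "kap * La^2 \<le> q^2 + P2"
    and e1: "eps \<le> 2 * d * be"
    and e2: "eps * (C1 + C3^2 / (al * kap)) \<le> al * mu / 4"
    and e3: "eps * C1 \<le> d / 8"
  shows "W \<le> - (al * mu / 4) * X^2 - (d / 8) * Z^2 - (eps * al * kap / 4) * La^2"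
proof -
  have s1: "eps * T1 \<le> eps * (- (al/2) * q^2 + C1 * (X^2 + Z^2) + C3 * X * La)"
    using T1 eps by (intro mult_left_mono) auto
  have s2: "(eps * al / 2) * P2 \<le> (d * al * be) * P2"
  proof -
    have "eps * al / 2 \<le> d * al * be" using e1 al by (simp add: field_simps)
    thus ?thesis using P2 by (rule mult_right_mono)
  qed
  have s3: "(eps * al / 2) * (kap * La^2) \<le> (eps * al / 2) * (q^2 + P2)"
    using kq eps al by (intro mult_left_mono) auto
  have s4: "C3 * X * La \<le> (al * kap / 4) * La^2 + (C3^2 / (al * kap)) * X^2"
  proof -
    define k where "k = al * kap"
    have k: "k > 0" using al kap by (simp add: k_def)
    have "0 \<le> (k / 2 * La - C3 * X)^2" by simp
    hence i1: "k * (C3 * X * La) \<le> k^2 / 4 * La^2 + C3^2 * X^2"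
      by (simp add: power2_eq_square algebra_simps)
    have i2: "k * ((k / 4) * La^2 + (C3^2 / k) * X^2) = k^2 / 4 * La^2 + C3^2 * X^2"
      using k by (simp add: field_simps power2_eq_square)
    have "k * (C3 * X * La) \<le> k * ((k / 4) * La^2 + (C3^2 / k) * X^2)" using i1 i2 by simp
    hence "C3 * X * La \<le> (k / 4) * La^2 + (C3^2 / k) * X^2" using k by (simp add: mult_le_cancel_left_pos)
    thus ?thesis by (simp add: k_def)
  qed
  have s5: "eps * (C3 * X * La) \<le> eps * ((al * kap / 4) * La^2 + (C3^2 / (al * kap)) * X^2)"
    using s4 eps by (intro mult_left_mono) auto
  have s6: "eps * (C1 * X^2) + eps * ((C3^2 / (al * kap)) * X^2) \<le> (al * mu / 4) * X^2"
  proof -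
    have "(eps * (C1 + C3^2 / (al * kap))) * X^2 \<le> (al * mu / 4) * X^2" using e2 by (rule mult_right_mono) simp
    thus ?thesis by (simp add: algebra_simps)
  qed
  have s7: "eps * (C1 * Z^2) \<le> (d / 8) * Z^2"
  proof -
    have "(eps * C1) * Z^2 \<le> (d / 8) * Z^2" using e3 by (rule mult_right_mono) simp
    thus ?thesis by (simp add: algebra_simps)
  qed
  have ex1: "eps * (- (al/2) * q^2 + C1 * (X^2 + Z^2) + C3 * X * La)
     = - (eps * al / 2) * q^2 + eps * (C1 * X^2) + eps * (C1 * Z^2) + eps * (C3 * X * La)"
    by (simp add: algebra_simps)
  have ex2: "eps * ((al * kap / 4) * La^2 + (C3^2 / (al * kap)) * X^2) = (eps * al * kap / 4) * La^2 + eps * ((C3^2 / (al * kap)) * X^2)"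
    by (simp add: algebra_simps)
  have ex3: "(eps * al / 2) * (kap * La^2) = 2 * ((eps * al * kap / 4) * La^2)" by (simp add: algebra_simps)
  have ex4: "(eps * al / 2) * (q^2 + P2) = (eps * al / 2) * q^2 + (eps * al / 2) * P2" by (simp add: algebra_simps)
  define tq where "tq = (eps * al / 2) * q^2"
  define tP where "tP = (eps * al / 2) * P2"
  define tL where "tL = (eps * al * kap / 4) * La^2"
  define a1 where "a1 = eps * (C1 * X^2)"
  define a2 where "a2 = eps * (C1 * Z^2)"
  define a3 where "a3 = eps * ((C3^2 / (al * kap)) * X^2)"
  define a4 where "a4 = eps * (C3 * X * La)"
  have f1: "eps * T1 \<le> - tq + a1 + a2 + a4" using s1 ex1 unfolding tq_def a1_def a2_def a4_def by linarith
  have f2: "a4 \<le> tL + a3" using s5 ex2 unfolding a4_def tL_def a3_def by linarith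
  have f3: "2 * tL \<le> tq + tP" using s3 ex3 ex4 unfolding tL_def tq_def tP_def by linarith
  have f4: "tP \<le> d * al * be * P2" using s2 unfolding tP_def .
  have f5: "a1 + a3 \<le> (al * mu / 4) * X^2" using s6 unfolding a1_def a3_def .
  have f6: "a2 \<le> (d / 8) * Z^2" using s7 unfolding a2_def .
  have f7: "(al * mu / 4) * X^2 - (al * mu / 2) * X^2 = - (al * mu / 4) * X^2" by (simp add: algebra_simps)
  have f8: "(d / 8) * Z^2 - (d/4) * Z^2 = - (d / 8) * Z^2" by (simp add: algebra_simps)
  show ?thesis using W f1 f2 f3 f4 f5 f6 f7 f8 unfolding tL_def[symmetric] by linarith
qed

lemma V_lower:
  fixes X La Z W Kq yl al be d eps sB :: real
  assumes al: "al > 0" and be: "be > 0" and d0: "d > 0" and d1: "d \<le> 1/2" and eps: "eps > 0" and sB: "sB > 0"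
    and X: "X \<ge> 0" and La: "La \<ge> 0" and Z: "Z \<ge> 0" and W: "W \<ge> 0" and Kq: "Kq \<ge> 0"
    and yl: "\<bar>yl\<bar> \<le> sB * X * La" and ZW: "Z \<le> W + al * La"
    and e4: "eps * sB \<le> 1/2" and e5: "eps * sB \<le> d * al / 2"
  shows "min (1/4) (min (d / (16 * al)) (d * al / 8)) * (X^2 + La^2 + Z^2)
     \<le> (1/2) * X^2 + ((1 - d)/(2*al)) * W^2 + (d*al/2) * La^2 + (1/(2*be)) * Kq + eps * yl"
proof -
  define m0 where "m0 = min (1/4) (min (d / (16 * al)) (d * al / 8))"
  have XL: "X * La \<le> (X^2 + La^2) / 2"
  proof -
    have "0 \<le> (X - La)^2" by simp
    thus ?thesis by (simp add: power2_eq_square algebra_simps)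
  qed
  have g1: "eps * yl \<ge> - (X^2 / 4) - (d * al / 4) * La^2"
  proof -
    have "- (eps * (sB * X * La)) \<le> eps * yl" using yl eps
      by (smt (verit) abs_le_D2 mult_left_mono mult_minus_right)
    moreover have "eps * (sB * X * La) \<le> (eps * sB) * ((X^2 + La^2) / 2)"
      using XL eps sB by (simp add: mult.assoc mult_left_mono)
    moreover have "(eps * sB) * ((X^2 + La^2) / 2) \<le> (1/2) * (X^2 / 2) + (d * al / 2) * (La^2 / 2)"
    proof -
      have "(eps * sB) * (X^2 / 2) \<le> (1/2) * (X^2 / 2)" using e4 by (intro mult_right_mono) auto
      moreover have "(eps * sB) * (La^2 / 2) \<le> (d * al / 2) * (La^2 / 2)" using e5 by (intro mult_right_mono) auto
      ultimately show ?thesis by (simp add: algebra_simps add_divide_distrib)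
    qed
    ultimately show ?thesis by (simp add: algebra_simps)
  qed
  have Z2: "Z^2 \<le> 2 * W^2 + 2 * al^2 * La^2"
  proof -
    have "Z^2 \<le> (W + al * La)^2" using Z ZW by (intro power_mono) auto
    moreover have "0 \<le> (W - al * La)^2" by simp
    ultimately show ?thesis by (simp add: power2_eq_square algebra_simps)
  qed
  have g2: "((1 - d)/(2*al)) * W^2 \<ge> (d / (16 * al)) * Z^2 - (d * al / 8) * La^2"
  proof -
    have "(d / (16 * al)) * Z^2 \<le> (d / (16 * al)) * (2 * W^2 + 2 * al^2 * La^2)"
      using Z2 d0 al by (intro mult_left_mono) auto
    also have "\<dots> = (d / (8 * al)) * W^2 + (d * al / 8) * La^2"
      using al by (simp add: field_simps power2_eq_square)
    finally have "(d / (16 * al)) * Z^2 - (d * al / 8) * La^2 \<le> (d / (8 * al)) * W^2" by simp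
    also have "\<dots> \<le> ((1 - d)/(2*al)) * W^2"
      using d0 d1 al by (intro mult_right_mono) (auto simp: field_simps)
    finally show ?thesis by simp
  qed
  have g3: "(1/(2*be)) * Kq \<ge> 0" using be Kq by simp
  have "m0 * (X^2 + La^2 + Z^2) \<le> (1/4) * X^2 + (d * al / 8) * La^2 + (d / (16 * al)) * Z^2"
  proof -
    have "m0 * X^2 \<le> (1/4) * X^2" unfolding m0_def by (intro mult_right_mono) auto
    moreover have "m0 * La^2 \<le> (d * al / 8) * La^2" unfolding m0_def by (intro mult_right_mono) auto
    moreover have "m0 * Z^2 \<le> (d / (16 * al)) * Z^2" unfolding m0_def by (intro mult_right_mono) auto
    ultimately show ?thesis by (simp add: algebra_simps)
  qed
  moreover have "(1/4) * X^2 + (d * al / 8) * La^2 + (d / (16 * al)) * Z^2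
      \<le> (1/2) * X^2 + ((1 - d)/(2*al)) * W^2 + (d*al/2) * La^2 + (1/(2*be)) * Kq + eps * yl"
    using g1 g2 g3 by (simp add: algebra_simps)
  ultimately show ?thesis unfolding m0_def by linarith
qed

lemma V_upper:
  fixes X La Z W Kq yl al be d eps sB sK :: real
  assumes al: "al > 0" and be: "be > 0" and d0: "d > 0" and d1: "d \<le> 1/2" and eps: "eps > 0" and sB: "sB > 0"
    and X: "X \<ge> 0" and La: "La \<ge> 0" and Z: "Z \<ge> 0" and W: "W \<ge> 0" and sK: "sK \<ge> 0"
    and Kq: "Kq \<le> sK * Z^2"
    and yl: "yl \<le> sB * X * La" and WZ: "W \<le> al * La + Z"
  shows "(1/2) * X^2 + ((1 - d)/(2*al)) * W^2 + (d*al/2) * La^2 + (1/(2*be)) * Kq + eps * yl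
     \<le> (1 + eps * sB + (1 - d) * al + d * al + (1 - d) / al + sK / be) * (X^2 + La^2 + Z^2)"
proof -
  have XL: "X * La \<le> (X^2 + La^2) / 2"
  proof -
    have "0 \<le> (X - La)^2" by simp
    thus ?thesis by (simp add: power2_eq_square algebra_simps)
  qed
  have W2: "W^2 \<le> 2 * al^2 * La^2 + 2 * Z^2"
  proof -
    have "W^2 \<le> (al * La + Z)^2" using W WZ by (intro power_mono) auto
    moreover have "0 \<le> (al * La - Z)^2" by simp
    ultimately show ?thesis by (simp add: power2_eq_square algebra_simps)
  qed
  have u1: "((1 - d)/(2*al)) * W^2 \<le> (1 - d) * al * La^2 + ((1 - d) / al) * Z^2"
  proof -
    have "((1 - d)/(2*al)) * W^2 \<le> ((1 - d)/(2*al)) * (2 * al^2 * La^2 + 2 * Z^2)"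
      using W2 d1 al by (intro mult_left_mono) auto
    also have "\<dots> = (1 - d) * al * La^2 + ((1 - d) / al) * Z^2" using al by (simp add: field_simps power2_eq_square)
    finally show ?thesis .
  qed
  have u2: "(1/(2*be)) * Kq \<le> (sK / be) * Z^2"
  proof -
    have "(1/(2*be)) * Kq \<le> (1/(2*be)) * (sK * Z^2)" using Kq be by (intro mult_left_mono) auto
    also have "\<dots> \<le> (sK / be) * Z^2" using be sK by (simp add: field_simps mult_right_mono)
    finally show ?thesis .
  qed
  have u3: "eps * yl \<le> (eps * sB) * (X^2 + La^2)"
  proof -
    have "eps * yl \<le> eps * (sB * X * La)" using yl eps by (intro mult_left_mono) auto
    also have "\<dots> \<le> (eps * sB) * ((X^2 + La^2) / 2)" using XL eps sB by (simp add: mult.assoc mult_left_mono)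
    also have "\<dots> \<le> (eps * sB) * (X^2 + La^2)" using eps sB by (intro mult_left_mono) auto
    finally show ?thesis .
  qed
  have u4: "(d*al/2) * La^2 \<le> (d * al) * La^2" using d0 al by (intro mult_right_mono) auto
  have u5: "(1/2) * X^2 \<le> 1 * X^2" by simp
  have nn: "0 \<le> (1 - d) * al" "0 \<le> (1 - d) / al" "0 \<le> sK / be" "0 \<le> eps * sB" "0 \<le> d * al"
    using d1 al be sK eps sB d0 by auto
  have "(1 + eps * sB + (1 - d) * al + d * al + (1 - d) / al + sK / be) * (X^2 + La^2 + Z^2)
     \<ge> 1 * X^2 + (eps * sB) * (X^2 + La^2) + (1 - d) * al * La^2 + (d * al) * La^2 + ((1 - d) / al) * Z^2 + (sK / be) * Z^2"
  proof -
    have "(1 + eps * sB + (1 - d) * al + d * al + (1 - d) / al + sK / be) * (X^2 + La^2 + Z^2)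
      = 1 * X^2 + (eps * sB) * (X^2 + La^2) + (1 - d) * al * La^2 + (d * al) * La^2 + ((1 - d) / al) * Z^2 + (sK / be) * Z^2
        + (1 * (La^2 + Z^2) + (eps * sB) * Z^2 + ((1 - d) * al) * (X^2 + Z^2) + (d * al) * (X^2 + Z^2)
           + ((1 - d) / al) * (X^2 + La^2) + (sK / be) * (X^2 + La^2))"
      by (simp add: algebra_simps)
    moreover have "0 \<le> 1 * (La^2 + Z^2) + (eps * sB) * Z^2 + ((1 - d) * al) * (X^2 + Z^2) + (d * al) * (X^2 + Z^2)
           + ((1 - d) / al) * (X^2 + La^2) + (sK / be) * (X^2 + La^2)"
      using nn d0 d1 al eps sB by (intro add_nonneg_nonneg mult_nonneg_nonneg) auto
    ultimately show ?thesis by linarith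
  qed
  thus ?thesis using u1 u2 u3 u4 u5 by linarith
qed

lemma decay:
  fixes ex :: "real \<Rightarrow> 'a::euclidean_space" and el ez :: "real \<Rightarrow> 'b::euclidean_space"
    and g :: "real \<Rightarrow> 'a" and B :: "'a \<Rightarrow> 'b" and BT :: "'b \<Rightarrow> 'a" and L K :: "'b \<Rightarrow> 'b"
  assumes linB: "linear B" and linBT: "linear BT" and linL: "linear L" and linK: "linear K"
    and adj: "\<And>u w. B u \<bullet> w = u \<bullet> BT w"
    and nB: "\<And>u. norm (B u) \<le> sB * norm u" and nBT: "\<And>w. norm (BT w) \<le> sB * norm w"
    and nL: "\<And>w. norm (L w) \<le> sL * norm w" and nK: "\<And>w. norm (K w) \<le> sK * norm w"
    and Lsym: "\<And>u w. L u \<bullet> w = u \<bullet> L w" and Ksym: "\<And>u w. K u \<bullet> w = u \<bullet> K w"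
    and Lpos: "\<And>w. w \<bullet> L w \<ge> 0" and Kpos: "\<And>w. K w \<bullet> w \<ge> 0"
    and kap: "kap > 0" and kapw: "\<And>w. kap * (norm w)\<^sup>2 \<le> (norm (BT w))\<^sup>2 + w \<bullet> L w"
    and alpha: "\<alpha> > 0" and beta: "\<beta> > 0" and mu: "\<mu> > 0" and sBpos: "sB > 0"
    and sLnn: "sL \<ge> 0" and sKnn: "sK \<ge> 0" and Lgnn: "Lg \<ge> 0"
    and LK: "\<And>t. t \<ge> 0 \<Longrightarrow> L (K (ez t)) = ez t"
    and gmon: "\<And>t. t \<ge> 0 \<Longrightarrow> ex t \<bullet> g t \<ge> \<mu> * (norm (ex t))\<^sup>2"
    and glip: "\<And>t. t \<ge> 0 \<Longrightarrow> norm (g t) \<le> Lg * norm (ex t)"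
    and dx: "\<And>t. t \<ge> 0 \<Longrightarrow> (ex has_vector_derivative (- \<alpha> *\<^sub>R (g t + BT (el t)) - BT (B (ex t) - ez t))) (at t within {0..})"
    and dl: "\<And>t. t \<ge> 0 \<Longrightarrow> (el has_vector_derivative (B (ex t) - ez t - \<beta> *\<^sub>R L (el t))) (at t within {0..})"
    and dz: "\<And>t. t \<ge> 0 \<Longrightarrow> (ez has_vector_derivative ((\<alpha> * \<beta>) *\<^sub>R L (el t))) (at t within {0..})"
  shows "\<exists>C c. C > 0 \<and> c > 0 \<and> (\<forall>t\<ge>0. (norm (ex t))\<^sup>2 + (norm (el t))\<^sup>2 + (norm (ez t))\<^sup>2 \<le> C * exp (- c * t))"
proof -
  define d where "d = min (1/2) (\<alpha> * \<mu> / (2 * sB\<^sup>2))"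
  have d0: "d > 0" and d1: "d \<le> 1/2" and d2: "d * sB\<^sup>2 \<le> \<alpha> * \<mu> / 2"
    using alpha mu sBpos by (auto simp: d_def field_simps min_def)
  define c0 where "c0 = 1 - d"
  define R where "R = \<alpha> * Lg + sB\<^sup>2 + sB"
  define C1 where "C1 = R\<^sup>2 / \<alpha> + sB\<^sup>2 + sB"
  define C3 where "C3 = \<beta> * sB * sL"
  have C1pos: "C1 > 0"
  proof -
    have "R\<^sup>2 / \<alpha> \<ge> 0" using alpha by simp
    thus ?thesis using sBpos unfolding C1_def by (smt (verit) zero_le_power2)
  qed
  have C3nn: "C3 \<ge> 0" using sBpos beta sLnn by (simp add: C3_def)
  define eps where "eps = min (2 * d * \<beta>) (min (\<alpha> * \<mu> / (4 * (C1 + C3\<^sup>2 / (\<alpha> * kap))))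
       (min (d / (8 * C1)) (min (1 / (2 * sB)) (d * \<alpha> / (2 * sB)))))"
  have Cpos: "C1 + C3\<^sup>2 / (\<alpha> * kap) > 0" using C1pos alpha kap by (simp add: add_pos_nonneg)
  have e0: "eps > 0" using d0 beta alpha mu Cpos C1pos sBpos by (simp add: eps_def)
  have e1: "eps \<le> 2 * d * \<beta>" by (simp add: eps_def)
  have e2: "eps * (C1 + C3\<^sup>2 / (\<alpha> * kap)) \<le> \<alpha> * \<mu> / 4"
  proof -
    have "eps \<le> \<alpha> * \<mu> / (4 * (C1 + C3\<^sup>2 / (\<alpha> * kap)))" by (simp add: eps_def)
    thus ?thesis using Cpos by (simp add: field_simps)
  qed
  have e3: "eps * C1 \<le> d / 8"
  proof -
    have "eps \<le> d / (8 * C1)" by (simp add: eps_def)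
    thus ?thesis using C1pos by (simp add: field_simps)
  qed
  have e4: "eps * sB \<le> 1/2"
  proof -
    have "eps \<le> 1 / (2 * sB)" by (simp add: eps_def)
    thus ?thesis using sBpos by (simp add: field_simps)
  qed
  have e5: "eps * sB \<le> d * \<alpha> / 2"
  proof -
    have "eps \<le> d * \<alpha> / (2 * sB)" by (simp add: eps_def)
    thus ?thesis using sBpos by (simp add: field_simps)
  qed
  have blB: "bounded_linear B" and blK: "bounded_linear K"
    using linB linK by (simp_all add: linear_conv_bounded_linear)
  define Dx where "Dx = (\<lambda>t. - \<alpha> *\<^sub>R (g t + BT (el t)) - BT (B (ex t) - ez t))"
  define Dl where "Dl = (\<lambda>t. B (ex t) - ez t - \<beta> *\<^sub>R L (el t))"
  define Dz where "Dz = (\<lambda>t. (\<alpha> * \<beta>) *\<^sub>R L (el t))"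
  define V where "V = (\<lambda>s. (1/2) * (ex s \<bullet> ex s) + (c0/(2*\<alpha>)) * ((\<alpha> *\<^sub>R el s + ez s) \<bullet> (\<alpha> *\<^sub>R el s + ez s))
      + (d*\<alpha>/2) * (el s \<bullet> el s) + (1/(2*\<beta>)) * (K (ez s) \<bullet> ez s) + eps * (B (ex s) \<bullet> el s))"
  define V' where "V' = (\<lambda>t. (1/2) * (ex t \<bullet> Dx t + Dx t \<bullet> ex t)
      + (c0/(2*\<alpha>)) * ((\<alpha> *\<^sub>R el t + ez t) \<bullet> (\<alpha> *\<^sub>R Dl t + Dz t) + (\<alpha> *\<^sub>R Dl t + Dz t) \<bullet> (\<alpha> *\<^sub>R el t + ez t))
      + (d*\<alpha>/2) * (el t \<bullet> Dl t + Dl t \<bullet> el t) + (1/(2*\<beta>)) * (K (ez t) \<bullet> Dz t + K (Dz t) \<bullet> ez t)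
      + eps * (B (ex t) \<bullet> Dl t + B (Dx t) \<bullet> el t))"
  have dV: "(V has_real_derivative V' t) (at t within {0..})" if t: "t \<ge> 0" for t
  proof -
    have hx: "(ex has_vector_derivative Dx t) (at t within {0..})" using dx[OF t] by (simp add: Dx_def)
    have hl: "(el has_vector_derivative Dl t) (at t within {0..})" using dl[OF t] by (simp add: Dl_def)
    have hz: "(ez has_vector_derivative Dz t) (at t within {0..})" using dz[OF t] by (simp add: Dz_def)
    have hs: "((\<lambda>s. \<alpha> *\<^sub>R el s + ez s) has_vector_derivative (\<alpha> *\<^sub>R Dl t + Dz t)) (at t within {0..})"
      by (intro has_vector_derivative_add bounded_linear.has_vector_derivative[OF bounded_linear_scaleR_right] hl hz)
    have hK: "((\<lambda>s. K (ez s)) has_vector_derivative K (Dz t)) (at t within {0..})" by (rule vd_linear[OF blK hz])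
    have hB: "((\<lambda>s. B (ex s)) has_vector_derivative B (Dx t)) (at t within {0..})" by (rule vd_linear[OF blB hx])
    show ?thesis unfolding V_def V'_def
      by (intro DERIV_add DERIV_cmult vd_inner hx hl hz hs hK hB)
  qed
  have Vid: "V' t = - \<alpha> * (ex t \<bullet> g t) - B (ex t) \<bullet> B (ex t) + (2 - d) * (B (ex t) \<bullet> ez t) - c0 * (ez t \<bullet> ez t)
      - d * \<alpha> * \<beta> * (el t \<bullet> L (el t)) + eps * (BT (el t) \<bullet> Dx t + B (ex t) \<bullet> Dl t)" if t: "t \<ge> 0" for t
  proof -
    define y where "y = B (ex t)"
    have E1: "ex t \<bullet> Dx t = - \<alpha> * (ex t \<bullet> g t) - \<alpha> * (y \<bullet> el t) - y \<bullet> y + y \<bullet> ez t"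
      unfolding Dx_def y_def by (simp add: inner_diff_right inner_add_right adj[symmetric] inner_commute algebra_simps)
    have E1': "Dx t \<bullet> ex t = ex t \<bullet> Dx t" by (rule inner_commute)
    have E2: "\<alpha> *\<^sub>R Dl t + Dz t = \<alpha> *\<^sub>R (y - ez t)"
      unfolding Dl_def Dz_def y_def by (simp add: algebra_simps)
    have E3: "(\<alpha> *\<^sub>R el t + ez t) \<bullet> (\<alpha> *\<^sub>R (y - ez t)) = \<alpha> * \<alpha> * (y \<bullet> el t) - \<alpha> * \<alpha> * (el t \<bullet> ez t) + \<alpha> * (y \<bullet> ez t) - \<alpha> * (ez t \<bullet> ez t)"
      by (simp add: inner_diff_right inner_add_left inner_commute algebra_simps)
    have E3': "(\<alpha> *\<^sub>R (y - ez t)) \<bullet> (\<alpha> *\<^sub>R el t + ez t) = (\<alpha> *\<^sub>R el t + ez t) \<bullet> (\<alpha> *\<^sub>R (y - ez t))"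
      by (rule inner_commute)
    have E4: "el t \<bullet> Dl t = y \<bullet> el t - el t \<bullet> ez t - \<beta> * (el t \<bullet> L (el t))"
      unfolding Dl_def y_def by (simp add: inner_diff_right inner_commute)
    have E4': "Dl t \<bullet> el t = el t \<bullet> Dl t" by (rule inner_commute)
    have E5: "K (ez t) \<bullet> Dz t = \<alpha> * \<beta> * (el t \<bullet> ez t)"
    proof -
      have "K (ez t) \<bullet> L (el t) = L (K (ez t)) \<bullet> el t" by (simp add: Lsym)
      also have "\<dots> = el t \<bullet> ez t" by (simp add: LK[OF t] inner_commute)
      finally show ?thesis unfolding Dz_def by simp
    qed
    have E5': "K (Dz t) \<bullet> ez t = K (ez t) \<bullet> Dz t"
      using Ksym[of "Dz t" "ez t"] inner_commute[of "Dz t" "K (ez t)"] by simp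
    have E6: "B (Dx t) \<bullet> el t = BT (el t) \<bullet> Dx t"
      using adj[of "Dx t" "el t"] inner_commute[of "Dx t" "BT (el t)"] by simp
    show ?thesis
      unfolding V'_def E1' E2 E3' E4' E5' E6 E1 E3 E4 E5 y_def[symmetric]
      using alpha beta by (simp add: c0_def field_simps)
  qed
  define a where "a = min (\<alpha> * \<mu> / 4) (min (d / 8) (eps * \<alpha> * kap / 4))"
  have a0: "a > 0" using alpha mu d0 e0 kap by (simp add: a_def)
  have Vd: "V' t \<le> - a * ((norm (ex t))\<^sup>2 + (norm (el t))\<^sup>2 + (norm (ez t))\<^sup>2)" if t: "t \<ge> 0" for t
  proof -
    define X where "X = norm (ex t)"
    define La where "La = norm (el t)"
    define Z where "Z = norm (ez t)"
    define y where "y = B (ex t)"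
    define u where "u = norm y"
    define q where "q = norm (BT (el t))"
    define P2 where "P2 = el t \<bullet> L (el t)"
    have X0: "X \<ge> 0" and La0: "La \<ge> 0" and Z0: "Z \<ge> 0" and u0: "u \<ge> 0" and q0: "q \<ge> 0"
      by (simp_all add: X_def La_def Z_def u_def q_def)
    have P20: "P2 \<ge> 0" by (simp add: P2_def Lpos)
    have uX: "u \<le> sB * X" unfolding u_def y_def X_def by (rule nB)
    have u2: "u\<^sup>2 \<le> sB\<^sup>2 * X\<^sup>2"
    proof -
      have "u\<^sup>2 \<le> (sB * X)\<^sup>2" using uX u0 by (intro power_mono) auto
      thus ?thesis by (simp add: power_mult_distrib)
    qed
    have yy: "y \<bullet> y = u\<^sup>2" by (simp add: u_def power2_norm_eq_inner)
    have zz: "ez t \<bullet> ez t = Z\<^sup>2" by (simp add: Z_def power2_norm_eq_inner)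
    have yz: "y \<bullet> ez t \<le> u * Z" unfolding u_def Z_def by (rule norm_cauchy_schwarz)
    have myz: "- (y \<bullet> ez t) \<le> u * Z"
      using Cauchy_Schwarz_ineq2[of y "ez t"] unfolding u_def Z_def by linarith
    have b1: "- \<alpha> * (ex t \<bullet> g t) \<le> - (\<alpha> * \<mu>) * X\<^sup>2"
      using gmon[OF t] alpha unfolding X_def by (simp add: mult_left_mono)
    have b2: "(2 - d) * (y \<bullet> ez t) - u\<^sup>2 - (1 - d) * Z\<^sup>2 \<le> d * u\<^sup>2 - (d/4) * Z\<^sup>2"
      by (rule base_ineq[OF d0 d1 yz u0 Z0])
    have b3: "d * u\<^sup>2 \<le> (\<alpha> * \<mu> / 2) * X\<^sup>2"
    proof -
      have "d * u\<^sup>2 \<le> d * (sB\<^sup>2 * X\<^sup>2)" using u2 d0 by (intro mult_left_mono) auto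
      also have "\<dots> = (d * sB\<^sup>2) * X\<^sup>2" by simp
      also have "\<dots> \<le> (\<alpha> * \<mu> / 2) * X\<^sup>2" using d2 by (intro mult_right_mono) auto
      finally show ?thesis .
    qed
    define T1 where "T1 = BT (el t) \<bullet> Dx t + y \<bullet> Dl t"
    have T1e: "T1 = - \<alpha> * (BT (el t) \<bullet> g t) - \<alpha> * (BT (el t) \<bullet> BT (el t)) - BT (el t) \<bullet> BT (y - ez t)
        + (y \<bullet> y - y \<bullet> ez t - \<beta> * (y \<bullet> L (el t)))"
      unfolding T1_def Dx_def Dl_def y_def by (simp add: inner_diff_right inner_add_right algebra_simps)
    have t1: "- \<alpha> * (BT (el t) \<bullet> g t) \<le> \<alpha> * q * Lg * X"
    proof -
      have "- (BT (el t) \<bullet> g t) \<le> q * norm (g t)"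
        using Cauchy_Schwarz_ineq2[of "BT (el t)" "g t"] unfolding q_def by linarith
      also have "\<dots> \<le> q * (Lg * X)" using glip[OF t] q0 unfolding X_def by (intro mult_left_mono) auto
      finally have "- (BT (el t) \<bullet> g t) \<le> q * (Lg * X)" .
      hence "\<alpha> * (- (BT (el t) \<bullet> g t)) \<le> \<alpha> * (q * (Lg * X))" using alpha by (intro mult_left_mono) auto
      thus ?thesis by (simp add: algebra_simps)
    qed
    have t2: "BT (el t) \<bullet> BT (el t) = q\<^sup>2" by (simp add: q_def power2_norm_eq_inner)
    have t3: "- (BT (el t) \<bullet> BT (y - ez t)) \<le> q * sB * (sB * X + Z)"
    proof -
      have "- (BT (el t) \<bullet> BT (y - ez t)) \<le> q * norm (BT (y - ez t))"
        using Cauchy_Schwarz_ineq2[of "BT (el t)" "BT (y - ez t)"] unfolding q_def by linarith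
      also have "\<dots> \<le> q * (sB * norm (y - ez t))" using nBT q0 by (intro mult_left_mono) auto
      also have "\<dots> \<le> q * (sB * (sB * X + Z))"
      proof -
        have "norm (y - ez t) \<le> u + Z" unfolding u_def Z_def by (rule norm_triangle_ineq4)
        also have "\<dots> \<le> sB * X + Z" using uX by simp
        finally show ?thesis using q0 sBpos by (intro mult_left_mono) auto
      qed
      finally show ?thesis by (simp add: algebra_simps)
    qed
    have t4: "- \<beta> * (y \<bullet> L (el t)) \<le> C3 * X * La"
    proof -
      have "- (y \<bullet> L (el t)) \<le> u * norm (L (el t))"
        using Cauchy_Schwarz_ineq2[of y "L (el t)"] unfolding u_def by linarith
      also have "\<dots> \<le> (sB * X) * (sL * La)" using uX nL[of "el t"] u0 sBpos X0 unfolding La_def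
        by (intro mult_mono) auto
      finally have "- (y \<bullet> L (el t)) \<le> (sB * X) * (sL * La)" .
      hence "\<beta> * (- (y \<bullet> L (el t))) \<le> \<beta> * ((sB * X) * (sL * La))" using beta by (intro mult_left_mono) auto
      thus ?thesis by (simp add: C3_def algebra_simps)
    qed
    have t5: "u * Z \<le> sB * X * Z" using uX Z0 by (simp add: mult_right_mono)
    have T1b: "T1 \<le> - \<alpha> * q\<^sup>2 + \<alpha> * q * Lg * X + q * sB * (sB * X + Z) + sB\<^sup>2 * X\<^sup>2 + sB * X * Z + C3 * X * La"
    proof -
      have t2': "\<alpha> * (BT (el t) \<bullet> BT (el t)) = \<alpha> * q\<^sup>2" using t2 by simp
      show ?thesis using T1e t1 t2' t3 t4 t5 u2 yy myz by linarith
    qed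
    have T1s: "T1 \<le> - (\<alpha>/2) * q\<^sup>2 + C1 * (X\<^sup>2 + Z\<^sup>2) + C3 * X * La"
      unfolding C1_def R_def by (rule T1_scalar[OF alpha q0 X0 Z0 sBpos Lgnn T1b])
    have W: "V' t \<le> - (\<alpha> * \<mu> / 2) * X\<^sup>2 - (d/4) * Z\<^sup>2 - d * \<alpha> * \<beta> * P2 + eps * T1"
    proof -
      have "V' t = - \<alpha> * (ex t \<bullet> g t) - y \<bullet> y + (2 - d) * (y \<bullet> ez t) - c0 * (ez t \<bullet> ez t)
          - d * \<alpha> * \<beta> * P2 + eps * T1"
        using Vid[OF t] unfolding y_def P2_def T1_def by simp
      moreover have "(1 - d) * (ez t \<bullet> ez t) = (1 - d) * Z\<^sup>2" using zz by simp
      moreover have "(\<alpha> * \<mu>) * X\<^sup>2 = 2 * ((\<alpha> * \<mu> / 2) * X\<^sup>2)" by simp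
      ultimately show ?thesis using b1 b2 b3 yy unfolding c0_def by linarith
    qed
    have kq: "kap * La\<^sup>2 \<le> q\<^sup>2 + P2" using kapw[of "el t"] unfolding La_def q_def P2_def .
    have fin: "V' t \<le> - (\<alpha> * \<mu> / 4) * X\<^sup>2 - (d / 8) * Z\<^sup>2 - (eps * \<alpha> * kap / 4) * La\<^sup>2"
      by (rule final_scalar[OF alpha beta kap e0 C3nn X0 La0 P20 W T1s kq e1 e2 e3])
    have "a * (X\<^sup>2 + La\<^sup>2 + Z\<^sup>2) \<le> (\<alpha> * \<mu> / 4) * X\<^sup>2 + (eps * \<alpha> * kap / 4) * La\<^sup>2 + (d / 8) * Z\<^sup>2"
    proof -
      have "a * X\<^sup>2 \<le> (\<alpha> * \<mu> / 4) * X\<^sup>2" unfolding a_def by (intro mult_right_mono) auto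
      moreover have "a * La\<^sup>2 \<le> (eps * \<alpha> * kap / 4) * La\<^sup>2" unfolding a_def by (intro mult_right_mono) auto
      moreover have "a * Z\<^sup>2 \<le> (d / 8) * Z\<^sup>2" unfolding a_def by (intro mult_right_mono) auto
      ultimately show ?thesis by (simp add: algebra_simps)
    qed
    thus ?thesis using fin unfolding X_def La_def Z_def by linarith
  qed
  define N where "N = (\<lambda>t. (norm (ex t))\<^sup>2 + (norm (el t))\<^sup>2 + (norm (ez t))\<^sup>2)"
  define m0 where "m0 = min (1/4) (min (d / (16 * \<alpha>)) (d * \<alpha> / 8))"
  define M0 where "M0 = 1 + eps * sB + (1 - d) * \<alpha> + d * \<alpha> + (1 - d) / \<alpha> + sK / \<beta>"
  have m00: "m0 > 0" using d0 alpha by (simp add: m0_def)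
  have M00: "M0 > 0"
  proof -
    have "0 \<le> eps * sB" "0 \<le> (1 - d) * \<alpha>" "0 \<le> d * \<alpha>" "0 \<le> (1 - d) / \<alpha>" "0 \<le> sK / \<beta>"
      using e0 sBpos d0 d1 alpha beta sKnn by auto
    thus ?thesis unfolding M0_def by linarith
  qed
  have Vform: "V t = (1/2) * (norm (ex t))\<^sup>2 + ((1 - d)/(2*\<alpha>)) * (norm (\<alpha> *\<^sub>R el t + ez t))\<^sup>2
      + (d*\<alpha>/2) * (norm (el t))\<^sup>2 + (1/(2*\<beta>)) * (K (ez t) \<bullet> ez t) + eps * (B (ex t) \<bullet> el t)" for t
    unfolding V_def c0_def by (simp add: power2_norm_eq_inner)
  have bnds: "m0 * N t \<le> V t \<and> V t \<le> M0 * N t" for t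
  proof -
    define W where "W = norm (\<alpha> *\<^sub>R el t + ez t)"
    have yl: "\<bar>B (ex t) \<bullet> el t\<bar> \<le> sB * norm (ex t) * norm (el t)"
    proof -
      have "\<bar>B (ex t) \<bullet> el t\<bar> \<le> norm (B (ex t)) * norm (el t)" by (rule Cauchy_Schwarz_ineq2)
      also have "\<dots> \<le> sB * norm (ex t) * norm (el t)" using nB by (intro mult_right_mono) auto
      finally show ?thesis .
    qed
    have ZW: "norm (ez t) \<le> W + \<alpha> * norm (el t)"
    proof -
      have "ez t = (\<alpha> *\<^sub>R el t + ez t) - \<alpha> *\<^sub>R el t" by simp
      hence "norm (ez t) \<le> norm (\<alpha> *\<^sub>R el t + ez t) + norm (\<alpha> *\<^sub>R el t)"
        by (metis norm_triangle_ineq4)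
      thus ?thesis using alpha by (simp add: W_def)
    qed
    have WZ: "W \<le> \<alpha> * norm (el t) + norm (ez t)"
      unfolding W_def using norm_triangle_ineq[of "\<alpha> *\<^sub>R el t" "ez t"] alpha by simp
    have Kq: "K (ez t) \<bullet> ez t \<le> sK * (norm (ez t))\<^sup>2"
    proof -
      have "K (ez t) \<bullet> ez t \<le> norm (K (ez t)) * norm (ez t)" by (rule norm_cauchy_schwarz)
      also have "\<dots> \<le> (sK * norm (ez t)) * norm (ez t)" using nK by (intro mult_right_mono) auto
      finally show ?thesis by (simp add: power2_eq_square algebra_simps)
    qed
    have lo: "m0 * N t \<le> V t"
      unfolding m0_def N_def Vform W_def[symmetric]
      by (rule V_lower[OF alpha beta d0 d1 e0 sBpos norm_ge_zero norm_ge_zero norm_ge_zero _ Kpos yl ZW e4 e5])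
        (simp add: W_def)
    have hi: "V t \<le> M0 * N t"
      unfolding M0_def N_def Vform W_def[symmetric]
      by (rule V_upper[OF alpha beta d0 d1 e0 sBpos norm_ge_zero norm_ge_zero norm_ge_zero _ sKnn Kq _ WZ])
        (use yl in \<open>auto simp: W_def\<close>)
    show ?thesis using lo hi by simp
  qed
  define r where "r = a / M0"
  have r0: "r > 0" using a0 M00 by (simp add: r_def)
  have Vd2: "V' t \<le> - r * V t" if t: "t \<ge> 0" for t
  proof -
    have "V t \<le> M0 * N t" using bnds by blast
    hence "V t / M0 \<le> N t" using M00 by (simp add: field_simps)
    hence "a * (V t / M0) \<le> a * N t" using a0 by (intro mult_left_mono) auto
    moreover have "V' t \<le> - a * N t" using Vd[OF t] unfolding N_def by simp
    ultimately show ?thesis unfolding r_def by simp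
  qed
  have G: "V t \<le> V 0 * exp (- r * t)" if t: "t \<ge> 0" for t
    by (rule gronwall_exp[OF dV Vd2 t])
  show ?thesis
  proof (intro exI conjI allI impI)
    show "V 0 / m0 + 1 > 0"
    proof -
      have "m0 * N 0 \<le> V 0" using bnds by blast
      moreover have "N 0 \<ge> 0" by (simp add: N_def)
      ultimately have "V 0 \<ge> 0" using m00 by (smt (verit) mult_nonneg_nonneg)
      hence "V 0 / m0 \<ge> 0" using m00 by simp
      thus ?thesis by linarith
    qed
    show "r > 0" by (rule r0)
    fix t :: real assume t: "t \<ge> 0"
    have "m0 * N t \<le> V 0 * exp (- r * t)" using bnds[of t] G[OF t] by linarith
    hence "N t \<le> (V 0 / m0) * exp (- r * t)" using m00 by (simp add: field_simps)
    also have "\<dots> \<le> (V 0 / m0 + 1) * exp (- r * t)" by (intro mult_right_mono) auto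
    finally show "(norm (ex t))\<^sup>2 + (norm (el t))\<^sup>2 + (norm (ez t))\<^sup>2 \<le> (V 0 / m0 + 1) * exp (- r * t)"
      unfolding N_def .
  qed
qed

lemma sum_bigA: "(\<Sum>i\<in>UNIV. bigA A blk x $ i) = A *v x"
  for A :: "real^'d::finite^'p::finite" and blk :: "'d \<Rightarrow> 'n::finite"
proof -
  have "(\<Sum>i\<in>UNIV. bigA A blk x $ i) $ j = (A *v x) $ j" for j
  proof -
    have "(\<Sum>i\<in>UNIV. bigA A blk x $ i) $ j = (\<Sum>i\<in>UNIV. \<Sum>k\<in>{k. blk k = i}. A$j$k * x$k)"
      by (simp add: sum_component bigA_def)
    also have "\<dots> = (\<Sum>k\<in>UNIV. A$j$k * x$k)"
      by (rule sum_group_blk[where h="\<lambda>i k. A$j$k * x$k"])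
    finally show ?thesis by (simp add: matrix_vector_mult_def)
  qed
  thus ?thesis by (simp add: vec_eq_iff)
qed

lemma linear_sumv: "linear (\<lambda>v::real^'p::finite^'n::finite. \<Sum>i\<in>UNIV. v$i)"
  by (rule linearI) (simp_all add: sum.distrib scaleR_sum_right)

theorem theorem2:
  fixes blk :: "'d::finite \<Rightarrow> 'n::finite"
    and f :: "'n \<Rightarrow> real^'d \<Rightarrow> real"
    and gradf :: "'n \<Rightarrow> real^'d \<Rightarrow> real^'d"
    and A :: "real^'d^'p::finite"
    and b :: "real^'p"
    and bb :: "real^'p^'n"
    and a :: "'n \<Rightarrow> 'n \<Rightarrow> real"
    and mu l :: "'n \<Rightarrow> real"
    and \<alpha> \<beta> \<phi> :: real
    and x :: "real \<Rightarrow> real^'d"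
    and lam z :: "real \<Rightarrow> real^'p^'n"
  assumes blocks_nonempty: "\<forall>i. \<exists>k. blk k = i"
    and f_block: "\<forall>i. depends_only_on_block blk i (f i)"
    and grad: "\<forall>i y. GDERIV (f i) y :> gradf i y"
    and strongly_convex: "\<forall>i. mu i > 0 \<and> strongly_convex_block blk i (mu i) (f i)"
    and smooth: "\<forall>i y w. norm (gradf i y - gradf i w) \<le> l i * norm (y - w)"
    and slater: "\<exists>y. A *v y = b"
    and has_opt: "\<exists>y. A *v y = b \<and> (\<forall>w. A *v w = b \<longrightarrow> (\<Sum>i\<in>UNIV. f i y) \<le> (\<Sum>i\<in>UNIV. f i w))"
    and undirected: "undirected_graph a"
    and connected: "graph_connected a"
    and full_row_rank: "rank A = CARD('p)"
    and b_split: "(\<Sum>i\<in>UNIV. bb$i) = b"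
    and beta_pos: "\<beta> > 0"
    and phi_pos: "\<phi> > 0"
    and phi_cond: "\<phi> > max (Max (range l) / 2 - 1) (2 * (sigma_max A blk)\<^sup>2)"
    and alpha_cond: "\<alpha> > max 1 ((\<phi> * (sigma_max A blk)\<^sup>2 / Min (range mu) + Max (range l) / 2)
                                 / (\<phi> + 1 - Max (range l) / 2))"
    and z0: "(\<Sum>i\<in>UNIV. z 0 $ i) = 0"
    and ode_x: "\<forall>t\<ge>0. (x has_vector_derivative
        (- \<alpha> *\<^sub>R ((\<Sum>i\<in>UNIV. gradf i (x t)) + bigAT A blk (lam t))
         - bigAT A blk (bigA A blk (x t) - bb - z t))) (at t within {0..})"
    and ode_lam: "\<forall>t\<ge>0. (lam has_vector_derivative
        (bigA A blk (x t) - bb - z t - \<beta> *\<^sub>R lapl a (lam t))) (at t within {0..})"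
    and ode_z: "\<forall>t\<ge>0. (z has_vector_derivative
        ((\<alpha> * \<beta>) *\<^sub>R lapl a (lam t))) (at t within {0..})"
  shows "\<exists>xs ls zs C c.
      A *v xs = b
    \<and> (\<forall>w. A *v w = b \<longrightarrow> (\<Sum>i\<in>UNIV. f i xs) \<le> (\<Sum>i\<in>UNIV. f i w))
    \<and> (\<forall>y. A *v y = b \<and> (\<forall>w. A *v w = b \<longrightarrow> (\<Sum>i\<in>UNIV. f i y) \<le> (\<Sum>i\<in>UNIV. f i w)) \<longrightarrow> y = xs)
    \<and> C > 0 \<and> c > 0
    \<and> (\<forall>t\<ge>0. norm ((x t, lam t, z t) - (xs, ls, zs)) \<le> C * exp (- c * t))"
proof -
  have sym: "\<And>i j. a i j = a j i" and nn: "\<And>i j. a i j \<ge> 0"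
    using undirected unfolding undirected_graph_def by auto
  obtain xs where feas: "A *v xs = b" and opt: "\<forall>w. A *v w = b \<longrightarrow> (\<Sum>i\<in>UNIV. f i xs) \<le> (\<Sum>i\<in>UNIV. f i w)"
    using has_opt by blast
  define m where "m = Min (range mu)"
  have mpos: "m > 0" unfolding m_def using strongly_convex Min_in[of "range mu"] by auto
  have mle: "\<forall>i. mu i \<ge> m" unfolding m_def by (auto intro: Min_le)
  have sc: "\<forall>i. strongly_convex_block blk i (mu i) (f i)" using strongly_convex by blast
  define G where "G = (\<lambda>y. \<Sum>i\<in>UNIV. gradf i y)"
  have uniq: "y = xs" if y: "A *v y = b \<and> (\<forall>w. A *v w = b \<longrightarrow> (\<Sum>i\<in>UNIV. f i y) \<le> (\<Sum>i\<in>UNIV. f i w))" for y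
  proof -
    have t: "(\<Sum>i\<in>UNIV. f i y) \<ge> (\<Sum>i\<in>UNIV. f i xs) + (y - xs) \<bullet> (\<Sum>i\<in>UNIV. gradf i xs) + m / 2 * (norm (y - xs))\<^sup>2"
      by (rule F_tangent[OF grad sc mle])
    have "A *v (y - xs) = 0" using y feas by (simp add: matrix_vector_mult_diff_distrib)
    hence "(y - xs) \<bullet> (\<Sum>i\<in>UNIV. gradf i xs) = 0" by (rule KKT_orth[OF grad feas opt])
    moreover have "(\<Sum>i\<in>UNIV. f i y) \<le> (\<Sum>i\<in>UNIV. f i xs)" using y feas by blast
    ultimately have "m / 2 * (norm (y - xs))\<^sup>2 \<le> 0" using t by linarith
    hence "(norm (y - xs))\<^sup>2 \<le> 0" using mpos by (simp add: mult_le_0_iff)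
    thus ?thesis by simp
  qed
  obtain c where cG: "transpose A *v c = - G xs" using KKT_mult[OF grad feas opt] unfolding G_def by blast
  define ls :: "real^'p^'n" where "ls = (\<chi> i. c)"
  define zs where "zs = bigA A blk xs - bb"
  have BTls: "bigAT A blk ls = - G xs" unfolding ls_def bigAT_const cG ..
  have Lls: "lapl a ls = 0" unfolding ls_def lapl_def by (simp add: vec_eq_iff)
  have szs: "(\<Sum>i\<in>UNIV. zs $ i) = 0"
    unfolding zs_def by (simp add: sum_subtractf sum_bigA feas b_split)
  have sz: "(\<Sum>i\<in>UNIV. z t $ i) = 0" if t: "t \<ge> 0" for t
  proof -
    have blS: "bounded_linear (\<lambda>v::real^'p^'n. \<Sum>i\<in>UNIV. v$i)"
      using linear_sumv by (simp add: linear_conv_bounded_linear)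
    have "((\<lambda>s. \<Sum>i\<in>UNIV. z s $ i) has_derivative (\<lambda>h. 0)) (at s within {0..})" if s: "s \<in> {0..}" for s
    proof -
      have "((\<lambda>s. \<Sum>i\<in>UNIV. z s $ i) has_vector_derivative (\<Sum>i\<in>UNIV. ((\<alpha> * \<beta>) *\<^sub>R lapl a (lam s)) $ i)) (at s within {0..})"
      proof -
        have "(z has_vector_derivative ((\<alpha> * \<beta>) *\<^sub>R lapl a (lam s))) (at s within {0..})" using ode_z s by auto
        from vd_linear[OF blS this] show ?thesis .
      qed
      moreover have "(\<Sum>i\<in>UNIV. ((\<alpha> * \<beta>) *\<^sub>R lapl a (lam s)) $ i) = 0"
        using lapl_sum[where a=a and v="lam s", OF sym] by (simp add: scaleR_sum_right[symmetric])
      ultimately show ?thesis by (simp add: has_vector_derivative_def)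
    qed
    hence "\<exists>C. \<forall>s\<in>{0..}. (\<Sum>i\<in>UNIV. z s $ i) = C"
      by (intro has_derivative_zero_constant) (auto simp: convex_real_interval)
    then obtain C where "\<forall>s\<in>{0..}. (\<Sum>i\<in>UNIV. z s $ i) = C" by blast
    hence "(\<Sum>i\<in>UNIV. z t $ i) = (\<Sum>i\<in>UNIV. z 0 $ i)" using t by auto
    thus ?thesis using z0 by simp
  qed
  obtain K :: "real^'p^'n \<Rightarrow> real^'p^'n" where linK: "linear K" and MK: "\<And>w. Mm a (K w) = w"
    using K_exists[OF sym nn connected] by metis
  obtain kap0 where kap0: "kap0 > 0" and kapv: "\<And>v. kap0 * norm v \<le> norm (Phi A blk a v)"
    using Phi_lower[OF connected full_row_rank] by metis
  have kapw: "kap0\<^sup>2 * (norm v)\<^sup>2 \<le> (norm (bigAT A blk v))\<^sup>2 + v \<bullet> lapl a v" for v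
  proof -
    have "(kap0 * norm v)\<^sup>2 \<le> (norm (Phi A blk a v))\<^sup>2"
      using kapv[of v] kap0 by (intro power_mono) auto
    thus ?thesis using norm_Phi_sq[of A blk a v] quad_nonneg[where a=a and v=v, OF sym nn]
      by (simp add: power_mult_distrib)
  qed
  obtain sB1 where sB1: "sB1 > 0" "\<And>v. norm (bigA A blk v) \<le> sB1 * norm v"
    using linear_bounded_pos[OF linear_bigA] by metis
  obtain sB2 where sB2: "sB2 > 0" "\<And>v. norm (bigAT A blk v) \<le> sB2 * norm v"
    using linear_bounded_pos[OF linear_bigAT] by metis
  define sB where "sB = max sB1 sB2"
  have nB: "norm (bigA A blk v) \<le> sB * norm v" for v
    using sB1(2)[of v] by (smt (verit) mult_right_mono norm_ge_zero sB_def)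
  have nBT: "norm (bigAT A blk v) \<le> sB * norm v" for v
    using sB2(2)[of v] by (smt (verit) mult_right_mono norm_ge_zero sB_def)
  obtain sL where sL: "sL > 0" "\<And>v::real^'p^'n. norm (lapl a v) \<le> sL * norm v"
    using linear_bounded_pos[OF linear_lapl] by metis
  obtain sK where sK: "sK > 0" "\<And>v. norm (K v) \<le> sK * norm v"
    using linear_bounded_pos[OF linK] by metis
  define Lg where "Lg = (\<Sum>i\<in>UNIV. \<bar>l i\<bar>)"
  have Lg0: "Lg \<ge> 0" by (simp add: Lg_def sum_nonneg)
  have glip: "norm (G y - G w) \<le> Lg * norm (y - w)" for y w
  proof -
    have "norm (G y - G w) = norm (\<Sum>i\<in>UNIV. gradf i y - gradf i w)" by (simp add: G_def sum_subtractf)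
    also have "\<dots> \<le> (\<Sum>i\<in>UNIV. norm (gradf i y - gradf i w))" by (rule norm_sum)
    also have "\<dots> \<le> (\<Sum>i\<in>UNIV. \<bar>l i\<bar> * norm (y - w))"
    proof (rule sum_mono)
      fix i
      have "norm (gradf i y - gradf i w) \<le> l i * norm (y - w)" using smooth by blast
      also have "\<dots> \<le> \<bar>l i\<bar> * norm (y - w)" by (intro mult_right_mono) auto
      finally show "norm (gradf i y - gradf i w) \<le> \<bar>l i\<bar> * norm (y - w)" .
    qed
    also have "\<dots> = Lg * norm (y - w)" by (simp add: Lg_def sum_distrib_right)
    finally show ?thesis .
  qed
  have alpha0: "\<alpha> > 0" using alpha_cond by simp
  have linBA: "linear (bigA A blk)" and linBT: "linear (bigAT A blk)" and linL: "linear (lapl a)"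
    by (rule linear_bigA linear_bigAT linear_lapl)+
  have dx: "((\<lambda>t. x t - xs) has_vector_derivative (- \<alpha> *\<^sub>R ((G (x t) - G xs) + bigAT A blk (lam t - ls))
      - bigAT A blk (bigA A blk (x t - xs) - (z t - zs)))) (at t within {0..})" if t: "t \<ge> 0" for t
  proof -
    have "((\<lambda>t. x t - xs) has_vector_derivative (- \<alpha> *\<^sub>R ((\<Sum>i\<in>UNIV. gradf i (x t)) + bigAT A blk (lam t))
         - bigAT A blk (bigA A blk (x t) - bb - z t)) - 0) (at t within {0..})"
      using ode_x t by (intro has_vector_derivative_diff has_vector_derivative_const) auto
    moreover have "- \<alpha> *\<^sub>R ((\<Sum>i\<in>UNIV. gradf i (x t)) + bigAT A blk (lam t)) - bigAT A blk (bigA A blk (x t) - bb - z t) - 0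
        = - \<alpha> *\<^sub>R ((G (x t) - G xs) + bigAT A blk (lam t - ls)) - bigAT A blk (bigA A blk (x t - xs) - (z t - zs))"
      by (simp add: linear_diff[OF linBA] linear_diff[OF linBT] BTls zs_def G_def algebra_simps)
    ultimately show ?thesis by simp
  qed
  have dl: "((\<lambda>t. lam t - ls) has_vector_derivative (bigA A blk (x t - xs) - (z t - zs) - \<beta> *\<^sub>R lapl a (lam t - ls))) (at t within {0..})"
    if t: "t \<ge> 0" for t
  proof -
    have D: "((\<lambda>t. lam t - ls) has_vector_derivative (bigA A blk (x t) - bb - z t - \<beta> *\<^sub>R lapl a (lam t)) - 0) (at t within {0..})"
      using ode_lam t by (intro has_vector_derivative_diff has_vector_derivative_const) auto
    have E: "bigA A blk (x t) - bb - z t - \<beta> *\<^sub>R lapl a (lam t) - 0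
        = bigA A blk (x t - xs) - (z t - zs) - \<beta> *\<^sub>R lapl a (lam t - ls)"
      by (simp add: linear_diff[OF linBA] linear_diff[OF linL] Lls zs_def algebra_simps)
    from D[unfolded E] show ?thesis .
  qed
  have dz: "((\<lambda>t. z t - zs) has_vector_derivative ((\<alpha> * \<beta>) *\<^sub>R lapl a (lam t - ls))) (at t within {0..})"
    if t: "t \<ge> 0" for t
  proof -
    have D: "((\<lambda>t. z t - zs) has_vector_derivative ((\<alpha> * \<beta>) *\<^sub>R lapl a (lam t)) - 0) (at t within {0..})"
      using ode_z t by (intro has_vector_derivative_diff has_vector_derivative_const) auto
    have E: "(\<alpha> * \<beta>) *\<^sub>R lapl a (lam t) - 0 = (\<alpha> * \<beta>) *\<^sub>R lapl a (lam t - ls)"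
      by (simp add: linear_diff[OF linL] Lls)
    from D[unfolded E] show ?thesis .
  qed
  have LK: "lapl a (K (z t - zs)) = z t - zs" if t: "t \<ge> 0" for t
  proof (rule K_lapl[where a=a and K=K, OF sym nn MK])
    show "(\<Sum>i\<in>UNIV. (z t - zs) $ i) = 0" using sz[OF t] szs by (simp add: sum_subtractf)
  qed
  have gmon: "(x t - xs) \<bullet> (G (x t) - G xs) \<ge> m * (norm (x t - xs))\<^sup>2" for t
    unfolding G_def by (rule F_monotone[OF grad sc mle])
  have dec: "\<exists>C c. C > 0 \<and> c > 0 \<and> (\<forall>t\<ge>0. (norm (x t - xs))\<^sup>2 + (norm (lam t - ls))\<^sup>2 + (norm (z t - zs))\<^sup>2 \<le> C * exp (- c * t))"
  proof (rule decay[where ex="\<lambda>t. x t - xs" and el="\<lambda>t. lam t - ls" and ez="\<lambda>t. z t - zs"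
        and g="\<lambda>t. G (x t) - G xs" and B="bigA A blk" and BT="bigAT A blk" and L="lapl a" and K=K
        and sB=sB and sL=sL and sK=sK and kap="kap0\<^sup>2" and \<alpha>=\<alpha> and \<beta>=\<beta> and \<mu>=m and Lg=Lg])
    show "linear (bigA A blk)" "linear (bigAT A blk)" "linear (lapl a)" "linear K" by (rule linBA linBT linL linK)+
    show "\<And>u w. bigA A blk u \<bullet> w = u \<bullet> bigAT A blk w" by (rule bigA_adj)
    show "\<And>u. norm (bigA A blk u) \<le> sB * norm u" by (rule nB)
    show "\<And>w. norm (bigAT A blk w) \<le> sB * norm w" by (rule nBT)
    show "\<And>w::real^'p^'n. norm (lapl a w) \<le> sL * norm w" by (rule sL(2))
    show "\<And>w. norm (K w) \<le> sK * norm w" by (rule sK(2))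
    show "\<And>u w::real^'p^'n. lapl a u \<bullet> w = u \<bullet> lapl a w" by (rule lapl_sym[where a=a, OF sym])
    show "\<And>u w. K u \<bullet> w = u \<bullet> K w" by (rule K_sym[where a=a and K=K, OF sym nn MK])
    show "\<And>w::real^'p^'n. w \<bullet> lapl a w \<ge> 0" by (simp add: quad_nonneg[where a=a, OF sym nn])
    show "\<And>w. K w \<bullet> w \<ge> 0" by (rule K_nonneg[where a=a and K=K, OF sym nn MK])
    show "kap0\<^sup>2 > 0" using kap0 by simp
    show "\<And>w. kap0\<^sup>2 * (norm w)\<^sup>2 \<le> (norm (bigAT A blk w))\<^sup>2 + w \<bullet> lapl a w" by (rule kapw)
    show "\<alpha> > 0" "\<beta> > 0" "m > 0" by (rule alpha0 beta_pos mpos)+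
    show "sB > 0" using sB1 by (simp add: sB_def)
    show "sL \<ge> 0" "sK \<ge> 0" "Lg \<ge> 0" using sL sK Lg0 by auto
    show "\<And>t. t \<ge> 0 \<Longrightarrow> lapl a (K (z t - zs)) = z t - zs" by (rule LK)
    show "\<And>t. t \<ge> 0 \<Longrightarrow> (x t - xs) \<bullet> (G (x t) - G xs) \<ge> m * (norm (x t - xs))\<^sup>2" by (rule gmon)
    show "\<And>t. t \<ge> 0 \<Longrightarrow> norm (G (x t) - G xs) \<le> Lg * norm (x t - xs)" by (rule glip)
  qed (use dx dl dz in auto)
  then obtain C0 c0 where C0: "C0 > 0" and c0: "c0 > 0"
    and bnd: "\<And>t. t \<ge> 0 \<Longrightarrow> (norm (x t - xs))\<^sup>2 + (norm (lam t - ls))\<^sup>2 + (norm (z t - zs))\<^sup>2 \<le> C0 * exp (- c0 * t)"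
    by blast
  show ?thesis
  proof (intro exI conjI allI impI)
    show "A *v xs = b" by (rule feas)
    show "\<And>w. A *v w = b \<Longrightarrow> (\<Sum>i\<in>UNIV. f i xs) \<le> (\<Sum>i\<in>UNIV. f i w)" using opt by blast
    show "\<And>y. A *v y = b \<and> (\<forall>w. A *v w = b \<longrightarrow> (\<Sum>i\<in>UNIV. f i y) \<le> (\<Sum>i\<in>UNIV. f i w)) \<Longrightarrow> y = xs"
      by (rule uniq)
    show "sqrt C0 > 0" using C0 by simp
    show "c0 / 2 > 0" using c0 by simp
    fix t :: real assume t: "t \<ge> 0"
    have "norm ((x t, lam t, z t) - (xs, ls, zs)) = sqrt ((norm (x t - xs))\<^sup>2 + (norm (lam t - ls))\<^sup>2 + (norm (z t - zs))\<^sup>2)"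
      by (simp add: norm_Pair add.assoc)
    also have "\<dots> \<le> sqrt (C0 * exp (- c0 * t))" using bnd[OF t] by (rule real_sqrt_le_mono)
    also have "\<dots> = sqrt C0 * exp (- (c0 / 2) * t)"
    proof -
      have "exp (- c0 * t) = (exp (- (c0 / 2) * t))\<^sup>2"
        by (simp add: power2_eq_square exp_add[symmetric])
      thus ?thesis by (simp add: real_sqrt_mult)
    qed
    finally show "norm ((x t, lam t, z t) - (xs, ls, zs)) \<le> sqrt C0 * exp (- (c0 / 2) * t)" .
  qed
qed

end
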